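(* Let $q$ be a prime power, $\eta\ge 0$ an integer with $\eta\neq 1$, and $(\delta_T,\delta_X)\in\mathbb{Z}\times\mathbb{N}$ with $\delta:=\delta_T+\eta\delta_X\ge 0$. For every $(\epsilon_T,\epsilon_X)\in\mathbb{N}^2$ with $\epsilon_T\ge q$ and $\epsilon_X\ge q$, \[d_\eta(\delta_T,\delta_X)\ \ge\ \min_{M\in\Delta^*(\delta_T,\delta_X)}\#\{N\in\Delta^*(\epsilon_T,\epsilon_X)\,:\,M \text{ divides } N\},\] and this is an equality for $\epsilon_T=\delta_T+\eta\delta_X+q$ and $\epsilon_X=\delta_X+q$.
   Context: $R=\mathbb{F}_q[T_1,T_2,X_1,X_2]$; the bidegree of $T_1^{c_1}T_2^{c_2}X_1^{d_1}X_2^{d_2}$ is $(c_1+c_2-\eta d_1, d_1+d_2)$; $R(\delta_T,\delta_X)$ is the span of monomials of bidegree $(\delta_T,\delta_X)$. The Hirzebruch surface $\mathcal{H}_\eta$ is the quotient of $(\mathbb{A}^2\setminus\{0\})^2$ by $\mathbb{G}_m^2$ acting by $(\lambda,\mu)\cdot(t_1,t_2,x_1,x_2)=(\lambda t_1,\lambda t_2,\mu\lambda^{-\eta}x_1,\mu x_2)$; each of its $(q+1)^2$ $\mathbb{F}_q$-points has a unique representative of the form $(1,a,1,b)$, $(0,1,1,b)$, $(1,a,0,1)$ or $(0,1,0,1)$ ($a,b\in\mathbb{F}_q$), at which polynomials are evaluated. $C_\eta(\delta_T,\delta_X)$ is the image of $F\mapsto(F(P))_{P\in\mathcal{H}_\eta(\mathbb{F}_q)}$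 on $R(\delta_T,\delta_X)$, and $d_\eta(\delta_T,\delta_X)$ its minimum Hamming distance. For a bidegree $(\delta_T,\delta_X)$ with $\delta=\delta_T+\eta\delta_X\ge0$: for $(d_2,c_2)\in\mathbb{N}^2$ with $d_2\le\delta_X$, $\eta d_2+c_2\le\delta$, put $M(d_2,c_2)=T_1^{\delta-\eta d_2-c_2}T_2^{c_2}X_1^{\delta_X-d_2}X_2^{d_2}$. Let $A=\delta_X$ if $\delta_T\ge0$ and $A=\delta/\eta$ if $\delta_T<0$; $\mathcal{A}_X=\{\alpha\in\mathbb{N}:\alpha\le\min(\lfloor A\rfloor,q-1)\}\cup(\{A\}\cap\mathbb{N})$; $\mathcal{K}(\delta_T,\delta_X)=\{(\alpha,\beta)\in\mathbb{N}^2:\alpha\in\mathcal{A}_X,\ \beta\le\min(\delta-\eta\alpha,q)-1\text{ or }\beta=\delta-\eta\alpha\}$. Condition (H): $\eta\ge2$, $\delta_T<0$, $\eta\mid\delta_T$, $q\le\delta_X+\delta_T/\eta$. Let $\mathcal{K}^*(\delta_T,\delta_X)=\mathcal{K}(\delta_T,\delta_X)\setminus\{(\delta/\eta,0)\}$ if (H) holds and $=\mathcal{K}(\delta_T,\delta_X)$ otherwise, and $\Delta^*(\delta_T,\delta_X)=\{M(\alpha,\beta):(\alpha,\beta)\in\mathcal{K}^*(\delta_T,\delta_X)\}$ (the monomial $M(\alpha,\beta)$ taken with respect to the relevant bidegree). *)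

theory Defs
  imports Complex_Main
begin

text \<open>Monomials T1^c1 T2^c2 X1^d1 X2^d2 are encoded by exponent tuples (c1,c2,d1,d2).\<close>
type_synonym mono = "nat \<times> nat \<times> nat \<times> nat"

definition bideg :: "nat \<Rightarrow> mono \<Rightarrow> int \<times> nat" where
  "bideg \<eta> m = (case m of (c1,c2,d1,d2) \<Rightarrow>
      (int c1 + int c2 - int \<eta> * int d1, d1 + d2))"

definition hmonos :: "nat \<Rightarrow> int \<Rightarrow> nat \<Rightarrow> mono set" where
  "hmonos \<eta> dT dX = {m. bideg \<eta> m = (dT, dX)}"

definition mono_dvd :: "mono \<Rightarrow> mono \<Rightarrow> bool" where
  "mono_dvd m n = (case m of (c1,c2,d1,d2) \<Rightarrow> case n of (c1',c2',d1',d2') \<Rightarrow>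
      c1 \<le> c1' \<and> c2 \<le> c2' \<and> d1 \<le> d1' \<and> d2 \<le> d2')"

text \<open>The F_q-rational points of the Hirzebruch surface, by their normalized representatives.\<close>
definition hirz_points :: "('a::field \<times> 'a \<times> 'a \<times> 'a) set" where
  "hirz_points = {(1,a,1,b) | a b. True} \<union> {(0,1,1,b) | b. True}
                 \<union> {(1,a,0,1) | a. True} \<union> {(0,1,0,1)}"

text \<open>A polynomial of R(dT,dX) is given by a coefficient function on its monomial basis.\<close>
definition eval_poly :: "nat \<Rightarrow> int \<Rightarrow> nat \<Rightarrow> (mono \<Rightarrow> 'a::field)
     \<Rightarrow> ('a \<times> 'a \<times> 'a \<times> 'a) \<Rightarrow> 'a" where
  "eval_poly \<eta> dT dX c P = (case P of (t1,t2,x1,x2) \<Rightarrow>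
     (\<Sum>m\<in>hmonos \<eta> dT dX. case m of (c1,c2,d1,d2) \<Rightarrow>
        c m * t1^c1 * t2^c2 * x1^d1 * x2^d2))"

definition hcode :: "'a itself \<Rightarrow> nat \<Rightarrow> int \<Rightarrow> nat \<Rightarrow>
     (('a::{finite,field} \<times> 'a \<times> 'a \<times> 'a) \<Rightarrow> 'a) set" where
  "hcode _ \<eta> dT dX = {(\<lambda>P. if P \<in> hirz_points then eval_poly \<eta> dT dX c P else 0) | c. True}"

definition hweight :: "(('a::{finite,field} \<times> 'a \<times> 'a \<times> 'a) \<Rightarrow> 'a) \<Rightarrow> nat" where
  "hweight w = card {P \<in> hirz_points. w P \<noteq> 0}"

definition hdist :: "'a::{finite,field} itself \<Rightarrow> nat \<Rightarrow> int \<Rightarrow> nat \<Rightarrow> nat" where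
  "hdist T \<eta> dT dX = Min {hweight w | w. w \<in> hcode T \<eta> dT dX \<and> w \<noteq> (\<lambda>_. 0)}"

definition Mmono :: "nat \<Rightarrow> int \<Rightarrow> nat \<Rightarrow> nat \<Rightarrow> nat \<Rightarrow> mono" where
  "Mmono \<eta> dT dX d2 c2 =
     (nat (dT + int \<eta> * int dX - int \<eta> * int d2 - int c2), c2, dX - d2, d2)"

definition A_val :: "nat \<Rightarrow> int \<Rightarrow> nat \<Rightarrow> rat" where
  "A_val \<eta> dT dX = (if dT \<ge> 0 then of_nat dX
                      else of_int (dT + int \<eta> * int dX) / of_nat \<eta>)"

definition A_X :: "nat \<Rightarrow> nat \<Rightarrow> int \<Rightarrow> nat \<Rightarrow> nat set" where
  "A_X q \<eta> dT dX = {\<alpha>. int \<alpha> \<le> min \<lfloor>A_val \<eta> dT dX\<rfloor> (int q - 1)}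
                    \<union> {\<alpha>. of_nat \<alpha> = A_val \<eta> dT dX}"

definition K_set :: "nat \<Rightarrow> nat \<Rightarrow> int \<Rightarrow> nat \<Rightarrow> (nat \<times> nat) set" where
  "K_set q \<eta> dT dX = {(\<alpha>,\<beta>). \<alpha> \<in> A_X q \<eta> dT dX \<and>
      (int \<beta> \<le> min (dT + int \<eta> * int dX - int \<eta> * int \<alpha>) (int q) - 1
       \<or> int \<beta> = dT + int \<eta> * int dX - int \<eta> * int \<alpha>)}"

definition cond_H :: "nat \<Rightarrow> nat \<Rightarrow> int \<Rightarrow> nat \<Rightarrow> bool" where
  "cond_H q \<eta> dT dX \<longleftrightarrow> \<eta> \<ge> 2 \<and> dT < 0 \<and> int \<eta> dvd dT \<and>
      int q \<le> int dX + dT div int \<eta>"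

definition K_star :: "nat \<Rightarrow> nat \<Rightarrow> int \<Rightarrow> nat \<Rightarrow> (nat \<times> nat) set" where
  "K_star q \<eta> dT dX = (if cond_H q \<eta> dT dX
      then K_set q \<eta> dT dX - {(nat ((dT + int \<eta> * int dX) div int \<eta>), 0)}
      else K_set q \<eta> dT dX)"

definition Delta_star :: "nat \<Rightarrow> nat \<Rightarrow> int \<Rightarrow> nat \<Rightarrow> mono set" where
  "Delta_star q \<eta> dT dX = (\<lambda>(\<alpha>,\<beta>). Mmono \<eta> dT dX \<alpha> \<beta>) ` K_star q \<eta> dT dX"

definition bound_fn :: "nat \<Rightarrow> nat \<Rightarrow> int \<Rightarrow> nat \<Rightarrow> nat \<Rightarrow> nat \<Rightarrow> nat" where
  "bound_fn q \<eta> dT dX eT eX =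
     Min ((\<lambda>M. card {N \<in> Delta_star q \<eta> (int eT) eX. mono_dvd M N}) ` Delta_star q \<eta> dT dX)"

end

theory Submission
  imports Defs "HOL-Computational_Algebra.Polynomial" "HOL-Library.Cardinality"
begin

definition P1 :: "('a::field \<times> 'a) set" where
  "P1 = range (\<lambda>a. (1,a)) \<union> {(0,1)}"

definition hv :: "nat \<Rightarrow> 'a::field poly \<Rightarrow> ('a \<times> 'a) \<Rightarrow> 'a" where
  "hv e p t = (if fst t = 0 then coeff p e else poly p (snd t))"

lemma P1_cases: "t \<in> P1 \<Longrightarrow> (\<And>a. t = (1,a) \<Longrightarrow> P) \<Longrightarrow> (t = (0,1) \<Longrightarrow> P) \<Longrightarrow> P"
  unfolding P1_def by auto

lemma finite_P1[simp]: "finite (P1 :: ('a::{finite,field} \<times> 'a) set)"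
  by (rule finite_subset[of _ UNIV]) auto

lemma card_P1: "card (P1 :: ('a::{finite,field} \<times> 'a) set) = card (UNIV::'a set) + 1"
proof -
  have "card (range (\<lambda>a::'a. (1::'a,a))) = card (UNIV::'a set)"
    by (rule card_image) (auto simp: inj_on_def)
  moreover have "(0,1) \<notin> range (\<lambda>a::'a. (1::'a,a))" by auto
  ultimately show ?thesis unfolding P1_def by simp
qed

lemma card_field_ge2: "2 \<le> card (UNIV :: 'a::{finite,field} set)"
proof -
  have "{0::'a, 1} \<subseteq> UNIV" by auto
  hence "card {0::'a,1} \<le> card (UNIV::'a set)" by (intro card_mono) auto
  thus ?thesis by simp
qed

lemma card_nonroots:
  fixes p :: "'a::{finite,field} poly"
  assumes "p \<noteq> 0"
  shows "card (UNIV::'a set) - degree p \<le> card {b. poly p b \<noteq> 0}"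
proof -
  have "{b. poly p b \<noteq> 0} = UNIV - {b. poly p b = 0}" by auto
  hence "card {b. poly p b \<noteq> 0} = card (UNIV::'a set) - card {b. poly p b = 0}"
    by (simp add: card_Diff_subset)
  moreover have "card {b. poly p b = 0} \<le> degree p" by (rule card_poly_roots_bound[OF assms])
  ultimately show ?thesis by linarith
qed

lemma card_P1_split:
  fixes f :: "'a::{finite,field} \<times> 'a \<Rightarrow> bool"
  shows "card {t \<in> P1. f t} = card {a. f (1,a)} + (if f (0,1) then 1 else 0)"
proof -
  have e: "{t \<in> P1. f t} = (\<lambda>a. (1,a)) ` {a. f (1,a)} \<union> (if f (0,1) then {(0,1)} else {})"
    unfolding P1_def by auto
  have c: "card ((\<lambda>a::'a. (1::'a,a)) ` {a. f (1,a)}) = card {a. f (1,a)}"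
    by (rule card_image) (auto simp: inj_on_def)
  show ?thesis unfolding e using c by (auto simp: card_insert_if)
qed

lemma L1:
  fixes p :: "'a::{finite,field} poly"
  assumes deg: "degree p \<le> e" and ex: "\<exists>t\<in>P1. hv e p t \<noteq> 0"
  shows "(card (UNIV::'a set) - e) + 1 \<le> card {t\<in>P1. hv e p t \<noteq> 0}"
proof (cases "card (UNIV::'a set) \<le> e")
  case True
  have "{t\<in>P1. hv e p t \<noteq> 0} \<noteq> {}" using ex by auto
  hence "card {t\<in>P1. hv e p t \<noteq> 0} \<ge> 1"
    by (metis (no_types, lifting) One_nat_def Suc_leI card_gt_0_iff finite_P1 finite_subset mem_Collect_eq subsetI)
  thus ?thesis using True by simp
next
  case False
  have p0: "p \<noteq> 0" using ex unfolding hv_def by (auto split: if_splits)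
  have spl: "card {t\<in>P1. hv e p t \<noteq> 0} = card {a. poly p a \<noteq> 0} + (if coeff p e \<noteq> 0 then 1 else 0)"
    using card_P1_split[of "\<lambda>t. hv e p t \<noteq> 0"] by (simp add: hv_def)
  have r: "card (UNIV::'a set) - degree p \<le> card {b. poly p b \<noteq> 0}" by (rule card_nonroots[OF p0])
  show ?thesis
  proof (cases "degree p = e")
    case True
    hence "coeff p e \<noteq> 0" using p0 by (metis leading_coeff_0_iff)
    thus ?thesis using spl r True by simp
  next
    case F2: False
    thus ?thesis using spl r deg False by simp
  qed
qed

lemma L1':
  fixes p :: "'a::{finite,field} poly"
  assumes deg: "degree p \<le> d" and p0: "p \<noteq> 0"
  shows "(card (UNIV::'a set) - degree p) + (if degree p = d then 1 else 0) \<le> card {t\<in>P1. hv d p t \<noteq> 0}"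
proof -
  have spl: "card {t\<in>P1. hv d p t \<noteq> 0} = card {a. poly p a \<noteq> 0} + (if coeff p d \<noteq> 0 then 1 else 0)"
    using card_P1_split[of "\<lambda>t. hv d p t \<noteq> 0"] by (simp add: hv_def)
  have r: "card (UNIV::'a set) - degree p \<le> card {b. poly p b \<noteq> 0}" by (rule card_nonroots[OF p0])
  have "degree p = d \<Longrightarrow> coeff p d \<noteq> 0" using p0 by (metis leading_coeff_0_iff)
  thus ?thesis using spl r by auto
qed


lemma coeff_sum_monom: "k \<le> n \<Longrightarrow> coeff (\<Sum>j\<le>n. monom (f j) j) k = f k"
proof -
  assume k: "k \<le> n"
  have "coeff (\<Sum>j\<le>n. monom (f j) j) k = (\<Sum>j\<le>n. if j = k then f j else 0)"
    unfolding coeff_sum coeff_monom by (rule sum.cong) auto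
  also have "\<dots> = f k" using k by (simp add: sum.delta)
  finally show ?thesis .
qed

lemma hv_sum_monom:
  fixes f :: "nat \<Rightarrow> 'a::field"
  assumes "x \<in> P1"
  shows "(\<Sum>k\<le>n. f k * fst x ^ (n - k) * snd x ^ k) = hv n (\<Sum>k\<le>n. monom (f k) k) x"
  using assms
proof (rule P1_cases)
  fix a assume x: "x = (1,a)"
  show ?thesis unfolding x hv_def by (simp add: poly_sum poly_monom)
next
  assume x: "x = (0,1)"
  have "(\<Sum>k\<le>n. f k * (0::'a) ^ (n - k)) = (\<Sum>k\<in>{n}. f k * (0::'a) ^ (n - k))"
    by (rule sum.mono_neutral_right) auto
  moreover have "coeff (\<Sum>k\<le>n. monom (f k) k) n = (\<Sum>k\<in>{n}. f k)"
    by (simp add: coeff_sum_monom)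
  ultimately show ?thesis unfolding x hv_def by simp
qed

lemma degree_sum_monom_le: "degree (\<Sum>k\<le>n. monom (f k) k) \<le> n"
  by (rule degree_sum_le) (auto intro: order.trans[OF degree_monom_le])

definition EE :: "nat \<Rightarrow> int \<Rightarrow> nat \<Rightarrow> nat \<Rightarrow> int" where
  "EE \<eta> dT dX k = dT + int \<eta> * int dX - int \<eta> * int k"

definition mono_of :: "nat \<Rightarrow> int \<Rightarrow> nat \<Rightarrow> nat \<Rightarrow> nat \<Rightarrow> mono" where
  "mono_of \<eta> dT dX k j = (nat (EE \<eta> dT dX k) - j, j, dX - k, k)"

definition JJ :: "nat \<Rightarrow> int \<Rightarrow> nat \<Rightarrow> nat \<Rightarrow> nat set" where
  "JJ \<eta> dT dX k = (if EE \<eta> dT dX k \<ge> 0 then {..nat (EE \<eta> dT dX k)} else {})"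

definition pk :: "nat \<Rightarrow> int \<Rightarrow> nat \<Rightarrow> (mono \<Rightarrow> 'a::field) \<Rightarrow> nat \<Rightarrow> 'a poly" where
  "pk \<eta> dT dX c k = (if EE \<eta> dT dX k \<ge> 0 then
      (\<Sum>j\<le>nat (EE \<eta> dT dX k). monom (c (mono_of \<eta> dT dX k j)) j) else 0)"

definition rk :: "nat \<Rightarrow> int \<Rightarrow> nat \<Rightarrow> (mono \<Rightarrow> 'a::field) \<Rightarrow> nat \<Rightarrow> 'a \<times> 'a \<Rightarrow> 'a" where
  "rk \<eta> dT dX c k t = hv (nat (EE \<eta> dT dX k)) (pk \<eta> dT dX c k) t"

definition Qt :: "nat \<Rightarrow> int \<Rightarrow> nat \<Rightarrow> (mono \<Rightarrow> 'a::field) \<Rightarrow> 'a \<times> 'a \<Rightarrow> 'a poly" where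
  "Qt \<eta> dT dX c t = (\<Sum>k\<le>dX. monom (rk \<eta> dT dX c k t) k)"

lemma degree_pk: "degree (pk \<eta> dT dX c k) \<le> nat (EE \<eta> dT dX k)"
  unfolding pk_def by (auto intro: degree_sum_monom_le)

lemma pk_neg: "EE \<eta> dT dX k < 0 \<Longrightarrow> pk \<eta> dT dX c k = 0"
  unfolding pk_def by auto

lemma rk_neg: "EE \<eta> dT dX k < 0 \<Longrightarrow> rk \<eta> dT dX c k t = 0"
  unfolding rk_def hv_def by (simp add: pk_neg)

lemma hmonos_eq:
  "hmonos \<eta> dT dX = (\<lambda>(k,j). mono_of \<eta> dT dX k j) ` (SIGMA k:{..dX}. JJ \<eta> dT dX k)"
proof (intro set_eqI iffI)
  fix m assume m: "m \<in> hmonos \<eta> dT dX"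
  obtain c1 c2 d1 d2 where mm: "m = (c1,c2,d1,d2)" by (cases m) auto
  have b: "int c1 + int c2 - int \<eta> * int d1 = dT" "d1 + d2 = dX"
    using m unfolding mm hmonos_def bideg_def by auto
  have E: "EE \<eta> dT dX d2 = int c1 + int c2"
    unfolding EE_def using b by (auto simp: algebra_simps of_nat_diff)
  have "(d2, c2) \<in> (SIGMA k:{..dX}. JJ \<eta> dT dX k)" using b E unfolding JJ_def by auto
  moreover have "m = mono_of \<eta> dT dX d2 c2" unfolding mm mono_of_def E using b by auto
  ultimately show "m \<in> (\<lambda>(k,j). mono_of \<eta> dT dX k j) ` (SIGMA k:{..dX}. JJ \<eta> dT dX k)"
    by force
next
  fix m assume "m \<in> (\<lambda>(k,j). mono_of \<eta> dT dX k j) ` (SIGMA k:{..dX}. JJ \<eta> dT dX k)"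
  then obtain k j where kj: "k \<le> dX" "j \<in> JJ \<eta> dT dX k" "m = mono_of \<eta> dT dX k j" by auto
  have E: "EE \<eta> dT dX k \<ge> 0" "j \<le> nat (EE \<eta> dT dX k)" using kj(2) unfolding JJ_def by (auto split: if_splits)
  show "m \<in> hmonos \<eta> dT dX" unfolding kj(3) mono_of_def hmonos_def bideg_def
    using E kj(1) by (auto simp: EE_def of_nat_diff algebra_simps)
qed

lemma inj_mono_of: "inj_on (\<lambda>(k,j). mono_of \<eta> dT dX k j) A"
  unfolding inj_on_def mono_of_def by auto

lemma finite_JJ[simp]: "finite (JJ \<eta> dT dX k)" unfolding JJ_def by auto

lemma finite_hmonos[simp]: "finite (hmonos \<eta> dT dX)"
  unfolding hmonos_eq by auto

lemma eval_struct:
  fixes c :: "mono \<Rightarrow> 'a::field"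
  assumes t: "(t1,t2) \<in> P1" and x: "(x1,x2) \<in> P1"
  shows "eval_poly \<eta> dT dX c (t1,t2,x1,x2) = hv dX (Qt \<eta> dT dX c (t1,t2)) (x1,x2)"
proof -
  let ?E = "\<lambda>k. EE \<eta> dT dX k"
  have "eval_poly \<eta> dT dX c (t1,t2,x1,x2) =
     (\<Sum>m\<in>(\<lambda>(k,j). mono_of \<eta> dT dX k j) ` (SIGMA k:{..dX}. JJ \<eta> dT dX k).
         case m of (c1,c2,d1,d2) \<Rightarrow> c m * t1^c1 * t2^c2 * x1^d1 * x2^d2)"
    unfolding eval_poly_def hmonos_eq by simp
  also have "\<dots> = (\<Sum>(k,j)\<in>(SIGMA k:{..dX}. JJ \<eta> dT dX k).
        c (mono_of \<eta> dT dX k j) * t1^(nat (?E k) - j) * t2^j * x1^(dX-k) * x2^k)"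
    by (subst sum.reindex[OF inj_mono_of]) (simp add: mono_of_def case_prod_beta)
  also have "\<dots> = (\<Sum>k\<le>dX. (\<Sum>j\<in>JJ \<eta> dT dX k.
        c (mono_of \<eta> dT dX k j) * t1^(nat (?E k) - j) * t2^j) * x1^(dX-k) * x2^k)"
    by (subst sum.Sigma[symmetric]) (auto simp: sum_distrib_right intro!: sum.cong)
  also have "\<dots> = (\<Sum>k\<le>dX. rk \<eta> dT dX c k (t1,t2) * x1^(dX-k) * x2^k)"
  proof (rule sum.cong[OF refl])
    fix k
    have "(\<Sum>j\<in>JJ \<eta> dT dX k. c (mono_of \<eta> dT dX k j) * t1^(nat (?E k) - j) * t2^j) = rk \<eta> dT dX c k (t1,t2)"
    proof (cases "?E k \<ge> 0")
      case True
      show ?thesis unfolding rk_def pk_def JJ_def using True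
        hv_sum_monom[OF t, of "\<lambda>j. c (mono_of \<eta> dT dX k j)" "nat (?E k)"] by simp
    next
      case False thus ?thesis unfolding JJ_def by (simp add: rk_neg)
    qed
    thus "(\<Sum>j\<in>JJ \<eta> dT dX k. c (mono_of \<eta> dT dX k j) * t1^(nat (?E k) - j) * t2^j) * x1^(dX-k) * x2^k
        = rk \<eta> dT dX c k (t1,t2) * x1^(dX-k) * x2^k" by simp
  qed
  also have "\<dots> = hv dX (Qt \<eta> dT dX c (t1,t2)) (x1,x2)"
    unfolding Qt_def using hv_sum_monom[OF x, of "\<lambda>k. rk \<eta> dT dX c k (t1,t2)" dX] by simp
  finally show ?thesis .
qed


lemma fermat_field: "(x::'a::{finite,field}) ^ CARD('a) = x"
proof (cases "x = 0")
  case True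
  have "CARD('a) > 0" by simp
  thus ?thesis using True by (simp add: zero_power)
next
  case False
  let ?S = "UNIV - {0::'a}"
  have bij: "bij_betw (\<lambda>y. x * y) ?S ?S"
  proof -
    have "inj_on (\<lambda>y. x * y) ?S" unfolding inj_on_def using False by auto
    moreover have "(\<lambda>y. x * y) ` ?S = ?S"
    proof (intro set_eqI iffI)
      fix y assume "y \<in> ?S"
      hence "y = x * (y / x)" "y / x \<in> ?S" using False by auto
      thus "y \<in> (\<lambda>y. x * y) ` ?S" by blast
    qed (use False in auto)
    ultimately show ?thesis unfolding bij_betw_def by simp
  qed
  have "(\<Prod>y\<in>?S. x * y) = (\<Prod>y\<in>?S. y)"
    using prod.reindex_bij_betw[OF bij, of "\<lambda>y. y"] by simp
  moreover have "(\<Prod>y\<in>?S. x * y) = x ^ card ?S * (\<Prod>y\<in>?S. y)"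
    by (simp add: prod.distrib)
  moreover have "(\<Prod>y\<in>?S. y) \<noteq> 0" by (simp add: prod_zero_iff)
  ultimately have "x ^ card ?S = 1" by simp
  moreover have "card ?S = CARD('a) - 1" by (simp add: card_Diff_subset)
  ultimately have one: "x ^ (CARD('a) - 1) = 1" by simp
  have "CARD('a) = Suc (CARD('a) - 1)" by simp
  hence "x ^ CARD('a) = x ^ Suc (CARD('a) - 1)" by (rule arg_cong)
  also have "\<dots> = x ^ (CARD('a) - 1) * x" by (rule power_Suc2)
  also have "\<dots> = x" using one by simp
  finally show ?thesis .
qed

definition red :: "nat \<Rightarrow> nat \<Rightarrow> nat" where
  "red q k = (if k < q then k else (k - 1) mod (q - 1) + 1)"

lemma pow_shift1:
  assumes j: "j \<ge> 1"
  shows "(b::'a::{finite,field}) ^ (j + (CARD('a) - 1)) = b ^ j"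
proof -
  have q: "CARD('a) \<ge> 2" by (rule card_field_ge2)
  have e: "j + (CARD('a) - 1) = (j - 1) + CARD('a)" using q j by linarith
  have "b ^ (j + (CARD('a) - 1)) = b ^ (j - 1) * b ^ CARD('a)" unfolding e by (rule power_add)
  also have "\<dots> = b ^ (j - 1) * b" by (simp only: fermat_field)
  also have "\<dots> = b ^ Suc (j - 1)" by (rule power_Suc2[symmetric])
  also have "Suc (j - 1) = j" using j by simp
  finally show ?thesis .
qed

lemma pow_shift: "j \<ge> 1 \<Longrightarrow> (b::'a::{finite,field}) ^ (j + m * (CARD('a) - 1)) = b ^ j"
proof (induction m)
  case 0 thus ?case by simp
next
  case (Suc m)
  have "j + Suc m * (CARD('a) - 1) = (j + m * (CARD('a) - 1)) + (CARD('a) - 1)" by (simp only: mult_Suc add_ac)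
  hence "b ^ (j + Suc m * (CARD('a) - 1)) = b ^ ((j + m * (CARD('a) - 1)) + (CARD('a) - 1))"
    by (rule arg_cong)
  also have "\<dots> = b ^ (j + m * (CARD('a) - 1))"
    by (rule pow_shift1) (use Suc.prems in linarith)
  also have "\<dots> = b ^ j" by (rule Suc.IH[OF Suc.prems])
  finally show ?case .
qed

lemma pow_red: "(b::'a::{finite,field}) ^ k = b ^ red CARD('a) k"
proof (cases "k < CARD('a)")
  case True thus ?thesis by (simp add: red_def)
next
  case False
  let ?q = "CARD('a)"
  have q: "?q \<ge> 2" by (rule card_field_ge2)
  have "(k - 1) mod (?q - 1) + (k - 1) div (?q - 1) * (?q - 1) = k - 1" by (rule mod_div_mult_eq)
  hence "k = ((k - 1) mod (?q - 1) + 1) + ((k - 1) div (?q - 1)) * (?q - 1)"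
    using False q by linarith
  hence "b ^ k = b ^ (((k - 1) mod (?q - 1) + 1) + ((k - 1) div (?q - 1)) * (?q - 1))"
    by (rule arg_cong[where f="\<lambda>n. b ^ n"])
  also have "\<dots> = b ^ ((k - 1) mod (?q - 1) + 1)" by (rule pow_shift) simp
  finally have bk: "b ^ k = b ^ ((k - 1) mod (?q - 1) + 1)" .
  have r: "red ?q k = (k - 1) mod (?q - 1) + 1" using False by (simp add: red_def)
  show ?thesis unfolding r by (rule bk)
qed

lemma red_le: "q \<ge> 2 \<Longrightarrow> red q k \<le> q - 1"
proof -
  assume q: "q \<ge> 2"
  have m: "(k - 1) mod (q - 1) < q - 1" using q by (intro mod_less_divisor) auto
  show ?thesis
  proof (cases "k < q")
    case True thus ?thesis by (simp add: red_def)
  next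
    case False
    hence "red q k = (k - 1) mod (q - 1) + 1" by (simp add: red_def)
    thus ?thesis using m by linarith
  qed
qed

lemma red_le_k: "q \<ge> 2 \<Longrightarrow> red q k \<le> k"
proof -
  assume q: "q \<ge> 2"
  have m: "(k - 1) mod (q - 1) \<le> k - 1" by (rule mod_less_eq_dividend)
  show ?thesis
  proof (cases "k < q")
    case True thus ?thesis by (simp add: red_def)
  next
    case False
    hence "red q k = (k - 1) mod (q - 1) + 1" by (simp add: red_def)
    thus ?thesis using m False q by linarith
  qed
qed

lemma red_fold:
  assumes q: "q \<ge> 2" and r: "red q k = a" and ne: "k \<noteq> a"
  shows "a \<ge> 1" "k \<ge> a + (q - 1)" "k \<ge> q"
proof -
  have kq: "k \<ge> q"
  proof (rule ccontr)
    assume "\<not> k \<ge> q" hence "red q k = k" by (simp add: red_def)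
    thus False using r ne by simp
  qed
  have h: "red q k = (k - 1) mod (q - 1) + 1" using kq by (simp add: red_def not_less)
  have a: "a = (k - 1) mod (q - 1) + 1" by (rule trans[OF r[symmetric] h])
  thus "a \<ge> 1" by simp
  have "k - 1 = (k - 1) mod (q - 1) + ((k - 1) div (q - 1)) * (q - 1)" by (rule mod_div_mult_eq[symmetric])
  moreover have "(k - 1) div (q - 1) \<ge> 1" 
  proof -
    have "(q - 1) div (q - 1) \<le> (k - 1) div (q - 1)" using kq by (intro div_le_mono) auto
    thus ?thesis using q by simp
  qed
  moreover have "1 * (q - 1) \<le> ((k - 1) div (q - 1)) * (q - 1)"
    using \<open>(k - 1) div (q - 1) \<ge> 1\<close> by (rule mult_le_mono1)
  ultimately have "k - 1 \<ge> (k - 1) mod (q - 1) + (q - 1)" by linarith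
  thus "k \<ge> a + (q - 1)" using a kq q by linarith
  show "k \<ge> q" by (rule kq)
qed

definition cw :: "nat \<Rightarrow> int \<Rightarrow> nat \<Rightarrow> (mono \<Rightarrow> 'a::{finite,field}) \<Rightarrow> ('a \<times> 'a \<times> 'a \<times> 'a \<Rightarrow> 'a)" where
  "cw \<eta> dT dX c = (\<lambda>P. if P \<in> hirz_points then eval_poly \<eta> dT dX c P else 0)"

lemma hcode_eq: "hcode TYPE('a::{finite,field}) \<eta> dT dX = range (cw \<eta> dT dX)"
  unfolding hcode_def cw_def by auto

lemma hirz_eq: "(hirz_points :: ('a::field \<times> 'a \<times> 'a \<times> 'a) set)
    = (\<lambda>(t,x). (fst t, snd t, fst x, snd x)) ` (P1 \<times> P1)"
proof (intro set_eqI iffI)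
  fix P :: "'a \<times> 'a \<times> 'a \<times> 'a" assume "P \<in> hirz_points"
  then consider a b where "P = (1,a,1,b)" | b where "P = (0,1,1,b)" | a where "P = (1,a,0,1)" | "P = (0,1,0,1)"
    unfolding hirz_points_def by blast
  thus "P \<in> (\<lambda>(t,x). (fst t, snd t, fst x, snd x)) ` (P1 \<times> P1)"
  proof cases
    case (1 a b) thus ?thesis unfolding P1_def by (intro image_eqI[of _ _ "((1,a),(1,b))"]) auto
  next
    case (2 b) thus ?thesis unfolding P1_def by (intro image_eqI[of _ _ "((0,1),(1,b))"]) auto
  next
    case (3 a) thus ?thesis unfolding P1_def by (intro image_eqI[of _ _ "((1,a),(0,1))"]) auto
  next
    case 4 thus ?thesis unfolding P1_def by (intro image_eqI[of _ _ "((0,1),(0,1))"]) auto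
  qed
next
  fix P :: "'a \<times> 'a \<times> 'a \<times> 'a" assume "P \<in> (\<lambda>(t,x). (fst t, snd t, fst x, snd x)) ` (P1 \<times> P1)"
  then obtain t x where tx: "t \<in> P1" "x \<in> P1" "P = (fst t, snd t, fst x, snd x)" by auto
  show "P \<in> hirz_points"
    using tx(1) proof (rule P1_cases)
    fix a assume t: "t = (1,a)"
    show ?thesis using tx(2) proof (rule P1_cases)
      fix b assume "x = (1,b)" thus ?thesis unfolding tx(3) t hirz_points_def by auto
    next
      assume "x = (0,1)" thus ?thesis unfolding tx(3) t hirz_points_def by auto
    qed
  next
    assume t: "t = (0,1)"
    show ?thesis using tx(2) proof (rule P1_cases)
      fix b assume "x = (1,b)" thus ?thesis unfolding tx(3) t hirz_points_def by auto
    next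
      assume "x = (0,1)" thus ?thesis unfolding tx(3) t hirz_points_def by auto
    qed
  qed
qed

lemma hweight_cw:
  "hweight (cw \<eta> dT dX c :: _ \<Rightarrow> 'a::{finite,field})
     = (\<Sum>t\<in>P1. card {x\<in>P1. hv dX (Qt \<eta> dT dX c t) x \<noteq> 0})"
proof -
  let ?F = "\<lambda>(t::'a\<times>'a,x::'a\<times>'a). (fst t, snd t, fst x, snd x)"
  have "{P \<in> hirz_points. cw \<eta> dT dX c P \<noteq> 0} = ?F ` (SIGMA t:P1. {x\<in>P1. hv dX (Qt \<eta> dT dX c t) x \<noteq> 0})"
  proof -
    have "\<And>t x. t \<in> P1 \<Longrightarrow> x \<in> P1 \<Longrightarrow> cw \<eta> dT dX c (fst t, snd t, fst x, snd x) = hv dX (Qt \<eta> dT dX c t) x"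
    proof -
      fix t x :: "'a \<times> 'a" assume tx: "t \<in> P1" "x \<in> P1"
      have "(fst t, snd t, fst x, snd x) \<in> hirz_points" unfolding hirz_eq using tx by force
      moreover have "eval_poly \<eta> dT dX c (fst t, snd t, fst x, snd x) = hv dX (Qt \<eta> dT dX c (fst t, snd t)) (fst x, snd x)"
        by (rule eval_struct) (use tx in auto)
      ultimately show "cw \<eta> dT dX c (fst t, snd t, fst x, snd x) = hv dX (Qt \<eta> dT dX c t) x"
        unfolding cw_def by simp
    qed
    note key = this
    show ?thesis
    proof (intro set_eqI iffI)
      fix P assume P: "P \<in> {P \<in> hirz_points. cw \<eta> dT dX c P \<noteq> 0}"
      then obtain t x where tx: "t \<in> P1" "x \<in> P1" "P = (fst t, snd t, fst x, snd x)"
        unfolding hirz_eq by auto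
      hence "hv dX (Qt \<eta> dT dX c t) x \<noteq> 0" using P key by auto
      thus "P \<in> ?F ` (SIGMA t:P1. {x\<in>P1. hv dX (Qt \<eta> dT dX c t) x \<noteq> 0})"
        using tx by (intro image_eqI[of _ _ "(t,x)"]) auto
    next
      fix P assume "P \<in> ?F ` (SIGMA t:P1. {x\<in>P1. hv dX (Qt \<eta> dT dX c t) x \<noteq> 0})"
      then obtain t x where tx: "t \<in> P1" "x \<in> P1" "P = (fst t, snd t, fst x, snd x)"
        "hv dX (Qt \<eta> dT dX c t) x \<noteq> 0" by auto
      have "P \<in> hirz_points" unfolding hirz_eq tx(3) using tx(1,2) by force
      thus "P \<in> {P \<in> hirz_points. cw \<eta> dT dX c P \<noteq> 0}" using tx key by auto
    qed
  qed
  moreover have "inj_on ?F X" for X by (auto simp: inj_on_def)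
  ultimately have "hweight (cw \<eta> dT dX c) = card (SIGMA t:P1. {x\<in>P1. hv dX (Qt \<eta> dT dX c t) x \<noteq> 0})"
    unfolding hweight_def by (simp add: card_image)
  also have "\<dots> = (\<Sum>t\<in>P1. card {x\<in>P1. hv dX (Qt \<eta> dT dX c t) x \<noteq> 0})"
    by (rule card_SigmaI) auto
  finally show ?thesis .
qed

lemma cw_nonzero:
  assumes "cw \<eta> dT dX c \<noteq> (\<lambda>_. 0 :: 'a::{finite,field})"
  shows "\<exists>t\<in>P1. \<exists>x\<in>P1. hv dX (Qt \<eta> dT dX c t) x \<noteq> 0"
proof -
  have "\<exists>P. cw \<eta> dT dX c P \<noteq> 0"
  proof (rule ccontr)
    assume "\<not> ?thesis"
    hence "cw \<eta> dT dX c = (\<lambda>_. 0)" by auto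
    thus False using assms by simp
  qed
  then obtain P where P: "cw \<eta> dT dX c P \<noteq> 0" by blast
  hence Ph: "P \<in> hirz_points" unfolding cw_def by (auto split: if_splits)
  then obtain t x where tx: "t \<in> P1" "x \<in> P1" "P = (fst t, snd t, fst x, snd x)" unfolding hirz_eq by auto
  have "eval_poly \<eta> dT dX c (fst t, snd t, fst x, snd x) = hv dX (Qt \<eta> dT dX c (fst t, snd t)) (fst x, snd x)"
    by (rule eval_struct) (use tx in auto)
  hence "hv dX (Qt \<eta> dT dX c t) x = cw \<eta> dT dX c P" using Ph tx(3) unfolding cw_def by simp
  hence "hv dX (Qt \<eta> dT dX c t) x \<noteq> 0" using P by simp
  thus ?thesis using tx(1,2) by blast
qed


definition ac :: "nat \<Rightarrow> nat \<Rightarrow> nat \<Rightarrow> nat" where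
  "ac q dX a = (q - a) + (if a = dX then 1 else 0)"

lemma EE_dX: "EE \<eta> dT dX dX = dT" unfolding EE_def by simp

lemma EE_mono: "a \<le> k \<Longrightarrow> EE \<eta> dT dX k \<le> EE \<eta> dT dX a"
  unfolding EE_def by (simp add: mult_left_mono)

lemma div_delta:
  assumes "\<eta> > 0"
  shows "(dT + int \<eta> * int dX) div int \<eta> = dT div int \<eta> + int dX"
  using assms by simp

lemma Kmem1:
  assumes eta: "\<eta> \<noteq> 1" and d: "dT + int \<eta> * int dX \<ge> 0" and aq: "a \<le> q - 1"
    and adX: "a \<le> dX" and E: "EE \<eta> dT dX a \<ge> 0" and q: "q \<ge> 2"
  shows "(a, nat (EE \<eta> dT dX a)) \<in> K_star q \<eta> dT dX"
proof -
  have AX: "a \<in> A_X q \<eta> dT dX"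
  proof (cases "dT \<ge> 0")
    case True
    hence "A_val \<eta> dT dX = of_nat dX" unfolding A_val_def by simp
    hence "\<lfloor>A_val \<eta> dT dX\<rfloor> = int dX" by simp
    thus ?thesis unfolding A_X_def using aq adX q by auto
  next
    case False
    hence "int \<eta> * int dX > 0" using d by linarith
    hence eta0: "\<eta> > 0" by (simp add: zero_less_mult_iff)
    have Av: "A_val \<eta> dT dX = of_int (dT + int \<eta> * int dX) / of_nat \<eta>"
      unfolding A_val_def using False by simp
    have "int a * int \<eta> \<le> dT + int \<eta> * int dX" using E unfolding EE_def by (simp add: algebra_simps)
    hence "(of_int (int a) :: rat) * of_nat \<eta> \<le> of_int (dT + int \<eta> * int dX)"
      by (metis of_int_le_iff of_int_mult of_int_of_nat_eq)
    hence "(of_int (int a) :: rat) \<le> of_int (dT + int \<eta> * int dX) / of_nat \<eta>"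
      using eta0 by (simp add: pos_le_divide_eq)
    hence "int a \<le> \<lfloor>A_val \<eta> dT dX\<rfloor>" unfolding Av by (simp only: le_floor_iff)
    thus ?thesis unfolding A_X_def using aq q by auto
  qed
  have K: "(a, nat (EE \<eta> dT dX a)) \<in> K_set q \<eta> dT dX"
    unfolding K_set_def using AX E by (auto simp: EE_def)
  show ?thesis
  proof (cases "cond_H q \<eta> dT dX")
    case False thus ?thesis using K unfolding K_star_def by simp
  next
    case True
    hence H: "\<eta> \<ge> 2" "int q \<le> int dX + dT div int \<eta>" unfolding cond_H_def by auto
    hence "(dT + int \<eta> * int dX) div int \<eta> = dT div int \<eta> + int dX" using div_delta[of \<eta>] by simp
    hence "nat ((dT + int \<eta> * int dX) div int \<eta>) \<ge> q" using H by linarith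
    hence "a \<noteq> nat ((dT + int \<eta> * int dX) div int \<eta>)" using aq q by linarith
    thus ?thesis using K True unfolding K_star_def by simp
  qed
qed

lemma Kmem2:
  assumes "dT \<ge> 0"
  shows "(dX, nat (EE \<eta> dT dX dX)) \<in> K_star q \<eta> dT dX"
proof -
  have "A_val \<eta> dT dX = of_nat dX" unfolding A_val_def using assms by simp
  hence AX: "dX \<in> A_X q \<eta> dT dX" unfolding A_X_def by simp
  have K: "(dX, nat (EE \<eta> dT dX dX)) \<in> K_set q \<eta> dT dX"
    unfolding K_set_def using AX assms by (auto simp: EE_def)
  have "\<not> cond_H q \<eta> dT dX" unfolding cond_H_def using assms by simp
  thus ?thesis using K unfolding K_star_def by simp
qed

lemma hv_zero[simp]: "hv e 0 t = 0" unfolding hv_def by simp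

lemma hv_sum: "hv e (sum p S) t = (\<Sum>k\<in>S. hv e (p k) t)"
  unfolding hv_def by (simp add: coeff_sum poly_sum)

lemma coeff_Qt: "k \<le> dX \<Longrightarrow> coeff (Qt \<eta> dT dX c t) k = rk \<eta> dT dX c k t"
  unfolding Qt_def by (rule coeff_sum_monom)

lemma degree_Qt: "degree (Qt \<eta> dT dX c t) \<le> dX"
  unfolding Qt_def by (rule degree_sum_monom_le)

lemma sum_ge_card_mult:
  fixes f :: "'b \<Rightarrow> nat"
  assumes "finite B" "A \<subseteq> B" "\<And>t. t \<in> A \<Longrightarrow> K \<le> f t"
  shows "card A * K \<le> sum f B"
proof -
  have "card A * K \<le> sum f A" using sum_bounded_below[of A K f] assms(3) by simp
  also have "\<dots> \<le> sum f B" by (rule sum_mono2[OF assms(1,2)]) simp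
  finally show ?thesis .
qed

lemma card_pos_P1:
  fixes g :: "'a::{finite,field} \<times> 'a \<Rightarrow> bool"
  assumes "x \<in> P1" "g x"
  shows "1 \<le> card {x\<in>P1. g x}"
proof -
  have "{x\<in>P1. g x} \<noteq> {}" using assms by blast
  moreover have "finite {x\<in>P1. g x}" by simp
  ultimately show ?thesis by (simp add: Suc_le_eq card_gt_0_iff)
qed

lemma zero_one_P1[simp]: "(0,1) \<in> P1" unfolding P1_def by simp
lemma one_P1[simp]: "(1,b) \<in> P1" unfolding P1_def by simp


abbreviation WW :: "nat \<Rightarrow> int \<Rightarrow> nat \<Rightarrow> (mono \<Rightarrow> 'a::{finite,field}) \<Rightarrow> nat" where
  "WW \<eta> dT dX c \<equiv> (\<Sum>t\<in>P1. card {x\<in>P1. hv dX (Qt \<eta> dT dX c t) x \<noteq> 0})"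

lemma lowerA:
  fixes c :: "mono \<Rightarrow> 'a::{finite,field}"
  assumes eta: "\<eta> \<noteq> 1" and d: "dT + int \<eta> * int dX \<ge> 0" and dXq: "dX < CARD('a)"
    and ne: "\<exists>t\<in>P1. \<exists>x\<in>P1. hv dX (Qt \<eta> dT dX c t) x \<noteq> 0"
  shows "\<exists>a. (a, nat (EE \<eta> dT dX a)) \<in> K_star CARD('a) \<eta> dT dX \<and>
     ac CARD('a) dX a * ((CARD('a) - nat (EE \<eta> dT dX a)) + 1) \<le> WW \<eta> dT dX c"
proof -
  let ?q = "CARD('a)"
  let ?Q = "Qt \<eta> dT dX c"
  define T' where "T' = {t\<in>P1. ?Q t \<noteq> 0}"
  have q2: "?q \<ge> 2" by (rule card_field_ge2)
  have finT: "finite T'" unfolding T'_def by simp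
  have T'ne: "T' \<noteq> {}"
  proof -
    obtain t x where tx: "t \<in> P1" "x \<in> P1" "hv dX (?Q t) x \<noteq> 0" using ne by blast
    have "?Q t \<noteq> 0"
    proof
      assume "?Q t = 0"
      hence "hv dX (?Q t) x = 0" by simp
      thus False using tx(3) by simp
    qed
    hence "t \<in> T'" unfolding T'_def using tx(1) by simp
    thus ?thesis by blast
  qed
  define as where "as = Max ((\<lambda>t. degree (?Q t)) ` T')"
  have "as \<in> (\<lambda>t. degree (?Q t)) ` T'" unfolding as_def by (rule Max_in) (use finT T'ne in auto)
  then obtain t0 where t0: "t0 \<in> T'" "degree (?Q t0) = as" by auto
  have degle: "\<And>t. t \<in> T' \<Longrightarrow> degree (?Q t) \<le> as"
    unfolding as_def using finT by (auto intro: Max_ge)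
  have asdX: "as \<le> dX" using degree_Qt[of \<eta> dT dX c t0] t0(2) by simp
  have fib: "ac ?q dX as \<le> card {x\<in>P1. hv dX (?Q t) x \<noteq> 0}" if t: "t \<in> T'" for t
  proof -
    have Q0: "?Q t \<noteq> 0" using t unfolding T'_def by simp
    have L: "(?q - degree (?Q t)) + (if degree (?Q t) = dX then 1 else 0) \<le> card {x\<in>P1. hv dX (?Q t) x \<noteq> 0}"
      by (rule L1'[OF degree_Qt Q0])
    have "ac ?q dX as \<le> (?q - degree (?Q t)) + (if degree (?Q t) = dX then 1 else 0)"
    proof (cases "degree (?Q t) = as")
      case True thus ?thesis unfolding ac_def by simp
    next
      case False
      hence "degree (?Q t) < as" using degle[OF t] by simp
      thus ?thesis unfolding ac_def using asdX dXq by auto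
    qed
    thus ?thesis using L by linarith
  qed
  have W1: "card T' * ac ?q dX as \<le> WW \<eta> dT dX c"
    by (rule sum_ge_card_mult) (use fib in \<open>auto simp: T'_def\<close>)
  have lead: "rk \<eta> dT dX c as t0 \<noteq> 0"
  proof -
    have "?Q t0 \<noteq> 0" using t0 unfolding T'_def by simp
    hence "coeff (?Q t0) (degree (?Q t0)) \<noteq> 0" by simp
    hence "coeff (?Q t0) as \<noteq> 0" using t0(2) by simp
    thus ?thesis using coeff_Qt[OF asdX, of \<eta> dT c t0] by simp
  qed
  have E: "EE \<eta> dT dX as \<ge> 0"
  proof (rule ccontr)
    assume "\<not> EE \<eta> dT dX as \<ge> 0"
    hence "rk \<eta> dT dX c as t0 = 0" by (intro rk_neg) simp
    thus False using lead by simp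
  qed
  have sub: "{t\<in>P1. rk \<eta> dT dX c as t \<noteq> 0} \<subseteq> T'"
  proof
    fix t assume "t \<in> {t\<in>P1. rk \<eta> dT dX c as t \<noteq> 0}"
    hence "t \<in> P1" "rk \<eta> dT dX c as t \<noteq> 0" by auto
    moreover have "coeff (?Q t) as = rk \<eta> dT dX c as t" by (rule coeff_Qt[OF asdX])
    ultimately show "t \<in> T'" unfolding T'_def by auto
  qed
  have L: "(?q - nat (EE \<eta> dT dX as)) + 1 \<le> card {t\<in>P1. rk \<eta> dT dX c as t \<noteq> 0}"
    unfolding rk_def
    by (rule L1[OF degree_pk]) (use lead t0 in \<open>auto simp: rk_def T'_def\<close>)
  have "card {t\<in>P1. rk \<eta> dT dX c as t \<noteq> 0} \<le> card T'" by (rule card_mono[OF finT sub])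
  hence "((?q - nat (EE \<eta> dT dX as)) + 1) * ac ?q dX as \<le> card T' * ac ?q dX as"
    using L by (intro mult_right_mono) auto
  hence "ac ?q dX as * ((?q - nat (EE \<eta> dT dX as)) + 1) \<le> WW \<eta> dT dX c" using W1 by (simp add: mult.commute)
  moreover have "(as, nat (EE \<eta> dT dX as)) \<in> K_star ?q \<eta> dT dX"
    by (rule Kmem1[OF eta d _ asdX E q2]) (use asdX dXq in linarith)
  ultimately show ?thesis by blast
qed

lemma lowerB:
  fixes c :: "mono \<Rightarrow> 'a::{finite,field}"
  assumes dXq: "dX \<ge> CARD('a)"
    and ex: "\<exists>t0\<in>P1. rk \<eta> dT dX c dX t0 \<noteq> 0"
  shows "\<exists>a. (a, nat (EE \<eta> dT dX a)) \<in> K_star CARD('a) \<eta> dT dX \<and>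
     ac CARD('a) dX a * ((CARD('a) - nat (EE \<eta> dT dX a)) + 1) \<le> WW \<eta> dT dX c"
proof -
  let ?q = "CARD('a)"
  let ?Q = "Qt \<eta> dT dX c"
  obtain t0 where t0: "t0 \<in> P1" "rk \<eta> dT dX c dX t0 \<noteq> 0" using ex by blast
  have E: "EE \<eta> dT dX dX \<ge> 0"
  proof (rule ccontr)
    assume "\<not> EE \<eta> dT dX dX \<ge> 0"
    hence "rk \<eta> dT dX c dX t0 = 0" by (intro rk_neg) simp
    thus False using t0 by simp
  qed
  hence dT: "dT \<ge> 0" by (simp add: EE_dX)
  define S where "S = {t\<in>P1. rk \<eta> dT dX c dX t \<noteq> 0}"
  have fib: "1 \<le> card {x\<in>P1. hv dX (?Q t) x \<noteq> 0}" if t: "t \<in> S" for t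
  proof -
    have "hv dX (?Q t) (0,1) = coeff (?Q t) dX" unfolding hv_def by simp
    also have "\<dots> = rk \<eta> dT dX c dX t" by (rule coeff_Qt) simp
    finally have "hv dX (?Q t) (0,1) \<noteq> 0" using t unfolding S_def by simp
    thus ?thesis by (rule card_pos_P1[OF zero_one_P1])
  qed
  have W1: "card S * 1 \<le> WW \<eta> dT dX c"
    by (rule sum_ge_card_mult) (use fib in \<open>auto simp: S_def\<close>)
  have L: "(?q - nat (EE \<eta> dT dX dX)) + 1 \<le> card S"
    unfolding S_def rk_def
    by (rule L1[OF degree_pk]) (use t0 in \<open>auto simp: rk_def\<close>)
  have "ac ?q dX dX = 1" unfolding ac_def using dXq by simp
  hence "ac ?q dX dX * ((?q - nat (EE \<eta> dT dX dX)) + 1) \<le> WW \<eta> dT dX c" using L W1 by simp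
  moreover have "(dX, nat (EE \<eta> dT dX dX)) \<in> K_star ?q \<eta> dT dX" by (rule Kmem2[OF dT])
  ultimately show ?thesis by blast
qed

definition Qr :: "nat \<Rightarrow> nat \<Rightarrow> int \<Rightarrow> nat \<Rightarrow> (mono \<Rightarrow> 'a::field) \<Rightarrow> 'a \<times> 'a \<Rightarrow> 'a poly" where
  "Qr q \<eta> dT dX c t = (\<Sum>k<dX. monom (rk \<eta> dT dX c k t) (red q k))"

lemma sum_atMost_split:
  fixes f :: "nat \<Rightarrow> 'b::comm_monoid_add"
  shows "(\<Sum>k\<le>n. f k) = (\<Sum>k<n. f k) + f n"
  using sum.lessThan_Suc[of f n] by (simp add: lessThan_Suc_atMost)

lemma poly_Qt_Qr:
  fixes c :: "mono \<Rightarrow> 'a::{finite,field}"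
  assumes z: "rk \<eta> dT dX c dX t = 0"
  shows "poly (Qt \<eta> dT dX c t) b = poly (Qr CARD('a) \<eta> dT dX c t) b"
proof -
  have "poly (Qt \<eta> dT dX c t) b = (\<Sum>k\<le>dX. rk \<eta> dT dX c k t * b ^ k)"
    unfolding Qt_def by (simp add: poly_sum poly_monom)
  also have "\<dots> = (\<Sum>k<dX. rk \<eta> dT dX c k t * b ^ k) + rk \<eta> dT dX c dX t * b ^ dX"
    by (rule sum_atMost_split)
  also have "\<dots> = (\<Sum>k<dX. rk \<eta> dT dX c k t * b ^ red CARD('a) k)"
    using z by (simp add: pow_red[symmetric])
  also have "\<dots> = poly (Qr CARD('a) \<eta> dT dX c t) b"
    unfolding Qr_def by (simp add: poly_sum poly_monom)
  finally show ?thesis .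
qed

lemma degree_Qr: "q \<ge> 2 \<Longrightarrow> degree (Qr q \<eta> dT dX c t) \<le> q - 1"
  unfolding Qr_def
proof (rule degree_sum_le)
  fix k assume q: "q \<ge> 2"
  show "degree (monom (rk \<eta> dT dX c k t) (red q k)) \<le> q - 1"
    by (rule order.trans[OF degree_monom_le red_le[OF q]])
qed simp

lemma coeff_Qr: "coeff (Qr q \<eta> dT dX c t) a = (\<Sum>k\<in>{k. k < dX \<and> red q k = a}. rk \<eta> dT dX c k t)"
proof -
  have "coeff (Qr q \<eta> dT dX c t) a = (\<Sum>k<dX. if red q k = a then rk \<eta> dT dX c k t else 0)"
    unfolding Qr_def coeff_sum coeff_monom by simp
  also have "\<dots> = (\<Sum>k\<in>{k\<in>{..<dX}. red q k = a}. rk \<eta> dT dX c k t)"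
    by (rule sum.inter_filter[symmetric]) simp
  also have "{k\<in>{..<dX}. red q k = a} = {k. k < dX \<and> red q k = a}" by auto
  finally show ?thesis .
qed

lemma lowerC:
  fixes c :: "mono \<Rightarrow> 'a::{finite,field}"
  assumes eta: "\<eta> \<noteq> 1" and d: "dT + int \<eta> * int dX \<ge> 0" and dXq: "dX \<ge> CARD('a)"
    and z: "\<forall>t\<in>P1. rk \<eta> dT dX c dX t = 0"
    and ne: "\<exists>t\<in>P1. \<exists>x\<in>P1. hv dX (Qt \<eta> dT dX c t) x \<noteq> 0"
  shows "\<exists>a. (a, nat (EE \<eta> dT dX a)) \<in> K_star CARD('a) \<eta> dT dX \<and>
     ac CARD('a) dX a * ((CARD('a) - nat (EE \<eta> dT dX a)) + 1) \<le> WW \<eta> dT dX c"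
proof -
  let ?q = "CARD('a)"
  let ?Q = "Qt \<eta> dT dX c"
  let ?R = "Qr ?q \<eta> dT dX c"
  have q2: "?q \<ge> 2" by (rule card_field_ge2)
  have inf0: "hv dX (?Q t) (0,1) = 0" if "t \<in> P1" for t
  proof -
    have "hv dX (?Q t) (0,1) = coeff (?Q t) dX" unfolding hv_def by simp
    also have "\<dots> = rk \<eta> dT dX c dX t" by (rule coeff_Qt) simp
    finally show ?thesis using z that by simp
  qed
  have aff: "hv dX (?Q t) (1,b) = poly (?R t) b" if "t \<in> P1" for t b
  proof -
    have "hv dX (?Q t) (1,b) = poly (?Q t) b" unfolding hv_def by simp
    also have "\<dots> = poly (?R t) b" by (rule poly_Qt_Qr) (use z that in simp)
    finally show ?thesis .
  qed
  have fibeq: "card {x\<in>P1. hv dX (?Q t) x \<noteq> 0} = card {b. poly (?R t) b \<noteq> 0}" if t: "t \<in> P1" for t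
    using card_P1_split[of "\<lambda>x. hv dX (?Q t) x \<noteq> 0"] inf0[OF t] aff[OF t] by simp
  define T' where "T' = {t\<in>P1. ?R t \<noteq> 0}"
  have finT: "finite T'" unfolding T'_def by simp
  have T'ne: "T' \<noteq> {}"
  proof -
    obtain t x where tx: "t \<in> P1" "x \<in> P1" "hv dX (?Q t) x \<noteq> 0" using ne by blast
    from tx(2) have "\<exists>b. poly (?R t) b \<noteq> 0"
    proof (rule P1_cases)
      fix b assume "x = (1,b)"
      thus ?thesis using tx(3) aff[OF tx(1)] by auto
    next
      assume "x = (0,1)" thus ?thesis using tx(3) inf0[OF tx(1)] by simp
    qed
    then obtain b where "poly (?R t) b \<noteq> 0" by blast
    hence "?R t \<noteq> 0" by auto
    hence "t \<in> T'" unfolding T'_def using tx(1) by simp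
    thus ?thesis by blast
  qed
  define as where "as = Max ((\<lambda>t. degree (?R t)) ` T')"
  have "as \<in> (\<lambda>t. degree (?R t)) ` T'" unfolding as_def by (rule Max_in) (use finT T'ne in auto)
  then obtain t0 where t0: "t0 \<in> T'" "degree (?R t0) = as" by auto
  have degle: "\<And>t. t \<in> T' \<Longrightarrow> degree (?R t) \<le> as"
    unfolding as_def using finT by (auto intro: Max_ge)
  have asq: "as \<le> ?q - 1" using degree_Qr[OF q2, of \<eta> dT dX c t0] t0(2) by simp
  have asdX: "as < dX" using asq dXq q2 by linarith
  have fib: "?q - as \<le> card {x\<in>P1. hv dX (?Q t) x \<noteq> 0}" if t: "t \<in> T'" for t
  proof -
    have tP: "t \<in> P1" and R0: "?R t \<noteq> 0" using t unfolding T'_def by auto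
    have "?q - degree (?R t) \<le> card {b. poly (?R t) b \<noteq> 0}" by (rule card_nonroots[OF R0])
    moreover have "?q - as \<le> ?q - degree (?R t)" using degle[OF t] by simp
    ultimately show ?thesis using fibeq[OF tP] by simp
  qed
  have W1: "card T' * (?q - as) \<le> WW \<eta> dT dX c"
    by (rule sum_ge_card_mult) (use fib in \<open>auto simp: T'_def\<close>)
  have cardT: "card T' \<ge> 1" using finT T'ne by (simp add: Suc_le_eq card_gt_0_iff)
  define SS where "SS = {k. k < dX \<and> red ?q k = as}"
  have finSS: "finite SS" unfolding SS_def by simp
  have coeffR: "coeff (?R t) as = (\<Sum>k\<in>SS. rk \<eta> dT dX c k t)" for t
    unfolding SS_def by (rule coeff_Qr)
  have lead: "coeff (?R t0) as \<noteq> 0"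
  proof -
    have "?R t0 \<noteq> 0" using t0 unfolding T'_def by simp
    hence "coeff (?R t0) (degree (?R t0)) \<noteq> 0" by simp
    thus ?thesis using t0(2) by simp
  qed
  have sub: "{t\<in>P1. coeff (?R t) as \<noteq> 0} \<subseteq> T'"
  proof
    fix t assume "t \<in> {t\<in>P1. coeff (?R t) as \<noteq> 0}"
    hence "t \<in> P1" "?R t \<noteq> 0" by auto
    thus "t \<in> T'" unfolding T'_def by simp
  qed
  have cardsub: "card {t\<in>P1. coeff (?R t) as \<noteq> 0} \<le> card T'" by (rule card_mono[OF finT sub])
  have redas: "red ?q as = as" using asq q2 unfolding red_def by simp
  have asSS: "as \<in> SS" unfolding SS_def using asdX redas by simp
  obtain k0 where k0: "k0 \<in> SS" "rk \<eta> dT dX c k0 t0 \<noteq> 0"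
    using lead unfolding coeffR by (rule sum.not_neutral_contains_not_neutral)
  have Ek0: "EE \<eta> dT dX k0 \<ge> 0"
  proof (rule ccontr)
    assume "\<not> EE \<eta> dT dX k0 \<ge> 0"
    hence "rk \<eta> dT dX c k0 t0 = 0" by (intro rk_neg) simp
    thus False using k0 by simp
  qed
  have "as \<le> k0" using k0(1) red_le_k[OF q2, of k0] unfolding SS_def by simp
  hence Eas: "EE \<eta> dT dX as \<ge> 0" using EE_mono[of as k0 \<eta> dT dX] Ek0 by linarith
  have acas: "ac ?q dX as = ?q - as" unfolding ac_def using asdX by simp
  have Kas: "(as, nat (EE \<eta> dT dX as)) \<in> K_star ?q \<eta> dT dX"
    by (rule Kmem1[OF eta d asq _ Eas q2]) (use asdX in simp)
  have fin_from_L: "((?q - nat (EE \<eta> dT dX as)) + 1) * ac ?q dX as \<le> WW \<eta> dT dX c"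
    if L: "(?q - nat (EE \<eta> dT dX as)) + 1 \<le> card {t\<in>P1. coeff (?R t) as \<noteq> 0}"
  proof -
    have "(?q - nat (EE \<eta> dT dX as)) + 1 \<le> card T'" using L cardsub by linarith
    hence "((?q - nat (EE \<eta> dT dX as)) + 1) * (?q - as) \<le> card T' * (?q - as)"
      by (rule mult_right_mono) simp
    thus ?thesis using W1 acas by simp
  qed
  show ?thesis
  proof (cases "\<eta> = 0")
    case True
    have EEk: "EE \<eta> dT dX k = dT" for k unfolding EE_def using True by simp
    define p where "p = (\<Sum>k\<in>SS. pk \<eta> dT dX c k)"
    have degp: "degree p \<le> nat dT" unfolding p_def
      by (rule degree_sum_le) (use degree_pk[of \<eta> dT dX c] EEk finSS in auto)
    have cp: "coeff (?R t) as = hv (nat dT) p t" for t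
      unfolding coeffR p_def hv_sum rk_def EEk by simp
    have L: "(?q - nat dT) + 1 \<le> card {t\<in>P1. hv (nat dT) p t \<noteq> 0}"
      by (rule L1[OF degp]) (use lead t0 cp in \<open>auto simp: T'_def\<close>)
    hence "((?q - nat (EE \<eta> dT dX as)) + 1) * ac ?q dX as \<le> WW \<eta> dT dX c"
      using fin_from_L cp EEk by simp
    thus ?thesis using Kas by (auto simp: mult.commute)
  next
    case False
    hence eta2: "\<eta> \<ge> 2" using eta by simp
    show ?thesis
    proof (cases "\<exists>k\<in>SS. k \<noteq> as \<and> EE \<eta> dT dX k \<ge> 0")
      case True
      then obtain k where k: "k \<in> SS" "k \<noteq> as" "EE \<eta> dT dX k \<ge> 0" by blast
      have kr: "red ?q k = as" "k < dX" using k(1) unfolding SS_def by auto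
      note rf = red_fold[OF q2 kr(1) k(2)]
      have "EE \<eta> dT dX (?q - 1) - EE \<eta> dT dX k = int \<eta> * (int k - int (?q - 1))"
        unfolding EE_def by (simp add: algebra_simps)
      moreover have "int \<eta> * (int k - int (?q - 1)) \<ge> int \<eta> * int as"
        using rf(2) q2 by (intro mult_left_mono) auto
      moreover have "int \<eta> * int as \<ge> 2 * int as" using eta2 by (intro mult_right_mono) auto
      ultimately have E1: "EE \<eta> dT dX (?q - 1) \<ge> int as + 1" using k(3) rf(1) by linarith
      have K1: "(?q - 1, nat (EE \<eta> dT dX (?q - 1))) \<in> K_star ?q \<eta> dT dX"
      proof (rule Kmem1[OF eta d order.refl _ _ q2])
        show "?q - 1 \<le> dX" using dXq by linarith
        show "EE \<eta> dT dX (?q - 1) \<ge> 0" using E1 by linarith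
      qed
      have ac1: "ac ?q dX (?q - 1) = 1" unfolding ac_def using dXq q2 by auto
      have "int (as + 1) \<le> EE \<eta> dT dX (?q - 1)" using E1 by simp
      hence "nat (int (as + 1)) \<le> nat (EE \<eta> dT dX (?q - 1))" by (rule nat_mono)
      hence nE: "as + 1 \<le> nat (EE \<eta> dT dX (?q - 1))" by (simp only: nat_int)
      have "?q - nat (EE \<eta> dT dX (?q - 1)) \<le> ?q - (as + 1)" using nE by (rule diff_le_mono2)
      hence "(?q - nat (EE \<eta> dT dX (?q - 1))) + 1 \<le> (?q - (as + 1)) + 1" by (rule add_right_mono)
      also have "(?q - (as + 1)) + 1 = 1 * (?q - as)" using asq q2 by simp
      also have "\<dots> \<le> card T' * (?q - as)" using cardT by (rule mult_right_mono) simp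
      also have "\<dots> \<le> WW \<eta> dT dX c" by (rule W1)
      finally have X: "(?q - nat (EE \<eta> dT dX (?q - 1))) + 1 \<le> WW \<eta> dT dX c" .
      have "ac ?q dX (?q - 1) * ((?q - nat (EE \<eta> dT dX (?q - 1))) + 1) \<le> WW \<eta> dT dX c"
        using X by (simp only: ac1 mult_1)
      thus ?thesis using K1 by blast
    next
      case False
      have cr: "coeff (?R t) as = rk \<eta> dT dX c as t" for t
      proof -
        have "(\<Sum>k\<in>SS. rk \<eta> dT dX c k t) = (\<Sum>k\<in>{as}. rk \<eta> dT dX c k t)"
        proof (rule sum.mono_neutral_right[OF finSS])
          show "{as} \<subseteq> SS" using asSS by simp
          show "\<forall>k\<in>SS - {as}. rk \<eta> dT dX c k t = 0"
          proof
            fix k assume "k \<in> SS - {as}"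
            hence "EE \<eta> dT dX k < 0" using False by auto
            thus "rk \<eta> dT dX c k t = 0" by (rule rk_neg)
          qed
        qed
        thus ?thesis unfolding coeffR by simp
      qed
      have L: "(?q - nat (EE \<eta> dT dX as)) + 1 \<le> card {t\<in>P1. rk \<eta> dT dX c as t \<noteq> 0}"
        unfolding rk_def
        by (rule L1[OF degree_pk]) (use lead t0 cr in \<open>auto simp: rk_def T'_def\<close>)
      hence "((?q - nat (EE \<eta> dT dX as)) + 1) * ac ?q dX as \<le> WW \<eta> dT dX c"
        using fin_from_L cr by simp
      thus ?thesis using Kas by (auto simp: mult.commute)
    qed
  qed
qed


lemma rat_le_div:
  assumes "\<eta> > 0"
  shows "(of_int z \<le> (of_int \<delta> / of_nat \<eta> :: rat)) \<longleftrightarrow> z * int \<eta> \<le> \<delta>"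
proof -
  have "(of_int z \<le> (of_int \<delta> / of_nat \<eta> :: rat)) \<longleftrightarrow> of_int z * of_nat \<eta> \<le> (of_int \<delta> :: rat)"
    using assms by (simp add: pos_le_divide_eq)
  also have "\<dots> \<longleftrightarrow> of_int (z * int \<eta>) \<le> (of_int \<delta> :: rat)" by simp
  also have "\<dots> \<longleftrightarrow> z * int \<eta> \<le> \<delta>" by (rule of_int_le_iff)
  finally show ?thesis .
qed

lemma rat_eq_div:
  assumes "\<eta> > 0"
  shows "(of_nat a = (of_int \<delta> / of_nat \<eta> :: rat)) \<longleftrightarrow> int a * int \<eta> = \<delta>"
proof -
  have "(of_nat a = (of_int \<delta> / of_nat \<eta> :: rat)) \<longleftrightarrow> of_nat a * of_nat \<eta> = (of_int \<delta> :: rat)"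
    using assms by (simp add: eq_divide_eq)
  also have "\<dots> \<longleftrightarrow> of_int (int a * int \<eta>) = (of_int \<delta> :: rat)" by simp
  also have "\<dots> \<longleftrightarrow> int a * int \<eta> = \<delta>" by (rule of_int_eq_iff)
  finally show ?thesis .
qed

lemma Kvalid:
  assumes eta: "\<eta> \<noteq> 1" and d: "dT + int \<eta> * int dX \<ge> 0" and q2: "q \<ge> 2"
    and K: "(a,b) \<in> K_star q \<eta> dT dX"
  shows "a \<le> dX" "EE \<eta> dT dX a \<ge> 0" "int b \<le> EE \<eta> dT dX a"
    "a \<le> q - 1 \<or> (a = dX \<and> dT \<ge> 0)" "b \<le> q - 1 \<or> int b = EE \<eta> dT dX a"
proof -
  have KS: "(a,b) \<in> K_set q \<eta> dT dX" using K unfolding K_star_def by (auto split: if_splits)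
  have KH: "cond_H q \<eta> dT dX \<Longrightarrow> (a,b) \<noteq> (nat ((dT + int \<eta> * int dX) div int \<eta>), 0)"
    using K unfolding K_star_def by auto
  have AX: "a \<in> A_X q \<eta> dT dX" and bc: "int b \<le> min (EE \<eta> dT dX a) (int q) - 1 \<or> int b = EE \<eta> dT dX a"
    using KS unfolding K_set_def EE_def by auto
  have main: "a \<le> dX \<and> EE \<eta> dT dX a \<ge> 0 \<and> (a \<le> q - 1 \<or> (a = dX \<and> dT \<ge> 0))"
  proof (cases "dT \<ge> 0")
    case True
    hence Av: "A_val \<eta> dT dX = of_nat dX" unfolding A_val_def by simp
    have "(int a \<le> int dX \<and> int a \<le> int q - 1) \<or> a = dX"
      using AX unfolding A_X_def Av by auto
    hence a1: "a \<le> dX" "a \<le> q - 1 \<or> a = dX" by auto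
    have "int \<eta> * int a \<le> int \<eta> * int dX" using a1(1) by (intro mult_left_mono) auto
    hence "EE \<eta> dT dX a \<ge> 0" unfolding EE_def using True by linarith
    thus ?thesis using a1 True by auto
  next
    case False
    hence "int \<eta> * int dX > 0" using d by linarith
    hence eta0: "\<eta> > 0" by (simp add: zero_less_mult_iff)
    have Av: "A_val \<eta> dT dX = of_int (dT + int \<eta> * int dX) / of_nat \<eta>"
      unfolding A_val_def using False by simp
    have lt: "a < dX" if "int a * int \<eta> \<le> dT + int \<eta> * int dX" for a
    proof -
      have "int \<eta> * int a < int \<eta> * int dX" using that False by (simp add: mult.commute)
      hence "int a < int dX" using eta0 by (simp add: mult_less_cancel_left)
      thus ?thesis by simp
    qed
    consider (s1) "int a \<le> \<lfloor>A_val \<eta> dT dX\<rfloor>" "int a \<le> int q - 1" | (s2) "of_nat a = A_val \<eta> dT dX"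
      using AX unfolding A_X_def by auto
    thus ?thesis
    proof cases
      case s1
      hence "of_int (int a) \<le> A_val \<eta> dT dX" by (simp only: le_floor_iff)
      hence le: "int a * int \<eta> \<le> dT + int \<eta> * int dX" unfolding Av by (simp only: rat_le_div[OF eta0])
      hence "EE \<eta> dT dX a \<ge> 0" unfolding EE_def by (simp add: algebra_simps)
      thus ?thesis using lt[OF le] s1(2) by auto
    next
      case s2
      hence eq: "int a * int \<eta> = dT + int \<eta> * int dX" unfolding Av by (simp only: rat_eq_div[OF eta0])
      hence E0: "EE \<eta> dT dX a = 0" unfolding EE_def by (simp add: algebra_simps)
      have adX: "a < dX" using lt eq by simp
      show ?thesis
      proof (cases "a \<le> q - 1")
        case True thus ?thesis using adX E0 by simp
      next
        case aq: False
        have dTe: "dT = int \<eta> * (int a - int dX)" using eq by (simp add: algebra_simps)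
        have dv: "dT div int \<eta> = int a - int dX" unfolding dTe using eta0 by simp
        have "cond_H q \<eta> dT dX" unfolding cond_H_def
          using eta eta0 False aq dv dTe by auto
        moreover have "(dT + int \<eta> * int dX) div int \<eta> = int a"
          using eq eta0 by (metis nonzero_mult_div_cancel_right of_nat_0_less_iff less_irrefl)
        ultimately have "b \<noteq> 0" using KH by auto
        moreover have "int b = 0" using bc E0 by auto
        ultimately show ?thesis by simp
      qed
    qed
  qed
  thus "a \<le> dX" "EE \<eta> dT dX a \<ge> 0" "a \<le> q - 1 \<or> (a = dX \<and> dT \<ge> 0)" by auto
  show "int b \<le> EE \<eta> dT dX a" using bc by auto
  show "b \<le> q - 1 \<or> int b = EE \<eta> dT dX a" using bc by auto
qed

definition bcv :: "nat \<Rightarrow> nat \<Rightarrow> int \<Rightarrow> nat \<Rightarrow> nat \<Rightarrow> nat \<Rightarrow> nat" where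
  "bcv q \<eta> dT dX a b = (q - b) + (if int b = EE \<eta> dT dX a then 1 else 0)"

lemma Kstar_eps:
  assumes q2: "q \<ge> 2" and eT: "eT \<ge> q" and eX: "eX \<ge> q"
  shows "(\<alpha>,\<beta>) \<in> K_star q \<eta> (int eT) eX \<longleftrightarrow>
    (\<alpha> \<le> q - 1 \<or> \<alpha> = eX) \<and> (\<beta> \<le> q - 1 \<or> int \<beta> = EE \<eta> (int eT) eX \<alpha>)"
proof -
  have nH: "\<not> cond_H q \<eta> (int eT) eX" unfolding cond_H_def by simp
  have Av: "A_val \<eta> (int eT) eX = of_nat eX" unfolding A_val_def by simp
  have AX: "\<alpha> \<in> A_X q \<eta> (int eT) eX \<longleftrightarrow> (\<alpha> \<le> q - 1 \<or> \<alpha> = eX)"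
    unfolding A_X_def Av using eX q2 by auto
  have Ebig: "EE \<eta> (int eT) eX \<alpha> \<ge> int q" if "\<alpha> \<le> q - 1 \<or> \<alpha> = eX"
  proof -
    have "\<alpha> \<le> eX" using that eX q2 by auto
    hence "int \<eta> * int \<alpha> \<le> int \<eta> * int eX" by (intro mult_left_mono) auto
    thus ?thesis unfolding EE_def using eT by linarith
  qed
  show ?thesis
  proof
    assume "(\<alpha>,\<beta>) \<in> K_star q \<eta> (int eT) eX"
    hence k: "\<alpha> \<in> A_X q \<eta> (int eT) eX"
      "int \<beta> \<le> min (EE \<eta> (int eT) eX \<alpha>) (int q) - 1 \<or> int \<beta> = EE \<eta> (int eT) eX \<alpha>"
      using nH unfolding K_star_def K_set_def EE_def by auto
    thus "(\<alpha> \<le> q - 1 \<or> \<alpha> = eX) \<and> (\<beta> \<le> q - 1 \<or> int \<beta> = EE \<eta> (int eT) eX \<alpha>)"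
      using AX by auto
  next
    assume a: "(\<alpha> \<le> q - 1 \<or> \<alpha> = eX) \<and> (\<beta> \<le> q - 1 \<or> int \<beta> = EE \<eta> (int eT) eX \<alpha>)"
    hence "\<alpha> \<in> A_X q \<eta> (int eT) eX" using AX by simp
    moreover have "int \<beta> \<le> min (EE \<eta> (int eT) eX \<alpha>) (int q) - 1 \<or> int \<beta> = EE \<eta> (int eT) eX \<alpha>"
      using a Ebig q2 by auto
    ultimately show "(\<alpha>,\<beta>) \<in> K_star q \<eta> (int eT) eX"
      using nH unfolding K_star_def K_set_def EE_def by simp
  qed
qed

lemma Mmono_eq: "Mmono \<eta> dT dX a b = (nat (EE \<eta> dT dX a - int b), b, dX - a, a)"
  unfolding Mmono_def EE_def by simp

lemma dvd_Mmono:
  "mono_dvd (Mmono \<eta> dT dX a b) (Mmono \<eta> eT eX \<alpha> \<beta>) \<longleftrightarrow>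
    nat (EE \<eta> dT dX a - int b) \<le> nat (EE \<eta> eT eX \<alpha> - int \<beta>) \<and> b \<le> \<beta> \<and> dX - a \<le> eX - \<alpha> \<and> a \<le> \<alpha>"
  unfolding Mmono_eq mono_dvd_def by simp

lemma cnt_eq_card:
  "card {N \<in> Delta_star q \<eta> (int eT) eX. mono_dvd (Mmono \<eta> dT dX a b) N}
   = card {(\<alpha>,\<beta>) \<in> K_star q \<eta> (int eT) eX. mono_dvd (Mmono \<eta> dT dX a b) (Mmono \<eta> (int eT) eX \<alpha> \<beta>)}"
proof -
  let ?f = "\<lambda>(\<alpha>,\<beta>). Mmono \<eta> (int eT) eX \<alpha> \<beta>"
  have "{N \<in> Delta_star q \<eta> (int eT) eX. mono_dvd (Mmono \<eta> dT dX a b) N}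
     = ?f ` {(\<alpha>,\<beta>) \<in> K_star q \<eta> (int eT) eX. mono_dvd (Mmono \<eta> dT dX a b) (Mmono \<eta> (int eT) eX \<alpha> \<beta>)}"
    unfolding Delta_star_def by auto
  moreover have "inj_on ?f X" for X unfolding inj_on_def Mmono_def by auto
  ultimately show ?thesis by (simp add: card_image)
qed

lemma EE_le_delta: "EE \<eta> dT dX a \<le> dT + int \<eta> * int dX"
  unfolding EE_def by simp

lemma EE_eps_ge: "\<alpha> \<le> eX \<Longrightarrow> EE \<eta> eT eX \<alpha> \<ge> eT"
proof -
  assume "\<alpha> \<le> eX"
  hence "int \<eta> * int \<alpha> \<le> int \<eta> * int eX" by (intro mult_left_mono) auto
  thus ?thesis unfolding EE_def by linarith
qed

lemma cnt_le:
  assumes eta: "\<eta> \<noteq> 1" and d: "dT + int \<eta> * int dX \<ge> 0" and q2: "q \<ge> 2"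
    and K: "(a,b) \<in> K_star q \<eta> dT dX" and eT: "eT \<ge> q" and eX: "eX \<ge> q"
  shows "card {N \<in> Delta_star q \<eta> (int eT) eX. mono_dvd (Mmono \<eta> dT dX a b) N} \<le> ac q dX a * bcv q \<eta> dT dX a b"
proof -
  note V = Kvalid[OF eta d q2 K]
  define SA where "SA = {a..<q} \<union> (if a = dX then {eX} else {})"
  define SB where "SB = (\<lambda>\<alpha>. {b..<q} \<union> (if int b = EE \<eta> dT dX a then {nat (EE \<eta> (int eT) eX \<alpha>)} else {}))"
  define I where "I = {(\<alpha>,\<beta>) \<in> K_star q \<eta> (int eT) eX. mono_dvd (Mmono \<eta> dT dX a b) (Mmono \<eta> (int eT) eX \<alpha> \<beta>)}"
  have finSA: "finite SA" unfolding SA_def by simp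
  have finSB: "finite (SB \<alpha>)" for \<alpha> unfolding SB_def by simp
  have sub: "I \<subseteq> (SIGMA \<alpha>:SA. SB \<alpha>)"
  proof
    fix p assume p: "p \<in> I"
    obtain \<alpha> \<beta> where pe: "p = (\<alpha>,\<beta>)" by (cases p) auto
    have k: "(\<alpha> \<le> q - 1 \<or> \<alpha> = eX) \<and> (\<beta> \<le> q - 1 \<or> int \<beta> = EE \<eta> (int eT) eX \<alpha>)"
      using p unfolding pe I_def Kstar_eps[OF q2 eT eX] by simp
    have dv: "nat (EE \<eta> dT dX a - int b) \<le> nat (EE \<eta> (int eT) eX \<alpha> - int \<beta>)" "b \<le> \<beta>" "dX - a \<le> eX - \<alpha>" "a \<le> \<alpha>"
      using p unfolding pe I_def dvd_Mmono by auto
    have "\<alpha> \<in> SA"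
    proof (cases "\<alpha> \<le> q - 1")
      case True thus ?thesis unfolding SA_def using dv(4) q2 by auto
    next
      case False
      hence "\<alpha> = eX" using k by simp
      hence "a = dX" using dv(3) V(1) by simp
      thus ?thesis unfolding SA_def using \<open>\<alpha> = eX\<close> by simp
    qed
    moreover have "\<beta> \<in> SB \<alpha>"
    proof (cases "\<beta> \<le> q - 1")
      case True thus ?thesis unfolding SB_def using dv(2) q2 by auto
    next
      case False
      hence be: "int \<beta> = EE \<eta> (int eT) eX \<alpha>" using k by simp
      hence "nat (EE \<eta> dT dX a - int b) = 0" using dv(1) by simp
      hence "int b = EE \<eta> dT dX a" using V(3) by simp
      moreover have "\<beta> = nat (EE \<eta> (int eT) eX \<alpha>)" using be by simp
      ultimately show ?thesis unfolding SB_def by simp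
    qed
    ultimately show "p \<in> (SIGMA \<alpha>:SA. SB \<alpha>)" unfolding pe by simp
  qed
  have cSB: "card (SB \<alpha>) \<le> bcv q \<eta> dT dX a b" for \<alpha>
  proof -
    have "card (SB \<alpha>) \<le> card {b..<q} + card (if int b = EE \<eta> dT dX a then {nat (EE \<eta> (int eT) eX \<alpha>)} else {})"
      unfolding SB_def by (rule card_Un_le)
    thus ?thesis unfolding bcv_def by (simp split: if_splits)
  qed
  have cSA: "card SA \<le> ac q dX a"
  proof -
    have "card SA \<le> card {a..<q} + card (if a = dX then {eX} else {})"
      unfolding SA_def by (rule card_Un_le)
    thus ?thesis unfolding ac_def by (simp split: if_splits)
  qed
  have "card I \<le> card (SIGMA \<alpha>:SA. SB \<alpha>)" by (rule card_mono) (use finSA finSB sub in auto)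
  also have "\<dots> = (\<Sum>\<alpha>\<in>SA. card (SB \<alpha>))" by (rule card_SigmaI) (use finSA finSB in auto)
  also have "\<dots> \<le> (\<Sum>\<alpha>\<in>SA. bcv q \<eta> dT dX a b)" by (rule sum_mono) (rule cSB)
  also have "\<dots> = card SA * bcv q \<eta> dT dX a b" by simp
  also have "\<dots> \<le> ac q dX a * bcv q \<eta> dT dX a b" using cSA by (rule mult_right_mono) simp
  finally show ?thesis unfolding cnt_eq_card I_def .
qed

lemma cnt_eq:
  assumes eta: "\<eta> \<noteq> 1" and d: "dT + int \<eta> * int dX \<ge> 0" and q2: "q \<ge> 2"
    and K: "(a,b) \<in> K_star q \<eta> dT dX"
    and eT: "eT = nat (dT + int \<eta> * int dX) + q" and eX: "eX = dX + q"
  shows "card {N \<in> Delta_star q \<eta> (int eT) eX. mono_dvd (Mmono \<eta> dT dX a b) N} = ac q dX a * bcv q \<eta> dT dX a b"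
proof -
  note V = Kvalid[OF eta d q2 K]
  have eTq: "eT \<ge> q" and eXq: "eX \<ge> q" using eT eX by auto
  define SA where "SA = {a..<q} \<union> (if a = dX then {eX} else {})"
  define SB where "SB = (\<lambda>\<alpha>. {b..<q} \<union> (if int b = EE \<eta> dT dX a then {nat (EE \<eta> (int eT) eX \<alpha>)} else {}))"
  define I where "I = {(\<alpha>,\<beta>) \<in> K_star q \<eta> (int eT) eX. mono_dvd (Mmono \<eta> dT dX a b) (Mmono \<eta> (int eT) eX \<alpha> \<beta>)}"
  have finSA: "finite SA" unfolding SA_def by simp
  have finSB: "finite (SB \<alpha>)" for \<alpha> unfolding SB_def by simp
  have finI: "finite I"
  proof -
    have "I \<subseteq> (SIGMA \<alpha>:SA. SB \<alpha>)"
    proof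
      fix p assume p: "p \<in> I"
      obtain \<alpha> \<beta> where pe: "p = (\<alpha>,\<beta>)" by (cases p) auto
      have k: "(\<alpha> \<le> q - 1 \<or> \<alpha> = eX) \<and> (\<beta> \<le> q - 1 \<or> int \<beta> = EE \<eta> (int eT) eX \<alpha>)"
        using p unfolding pe I_def Kstar_eps[OF q2 eTq eXq] by simp
      have dv: "nat (EE \<eta> dT dX a - int b) \<le> nat (EE \<eta> (int eT) eX \<alpha> - int \<beta>)" "b \<le> \<beta>" "dX - a \<le> eX - \<alpha>" "a \<le> \<alpha>"
        using p unfolding pe I_def dvd_Mmono by auto
      have "\<alpha> \<in> SA"
      proof (cases "\<alpha> \<le> q - 1")
        case True thus ?thesis unfolding SA_def using dv(4) q2 by auto
      next
        case False
        hence "\<alpha> = eX" using k by simp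
        hence "a = dX" using dv(3) V(1) by simp
        thus ?thesis unfolding SA_def using \<open>\<alpha> = eX\<close> by simp
      qed
      moreover have "\<beta> \<in> SB \<alpha>"
      proof (cases "\<beta> \<le> q - 1")
        case True thus ?thesis unfolding SB_def using dv(2) q2 by auto
      next
        case False
        hence be: "int \<beta> = EE \<eta> (int eT) eX \<alpha>" using k by simp
        hence "nat (EE \<eta> dT dX a - int b) = 0" using dv(1) by simp
        hence "int b = EE \<eta> dT dX a" using V(3) by simp
        moreover have "\<beta> = nat (EE \<eta> (int eT) eX \<alpha>)" using be by simp
        ultimately show ?thesis unfolding SB_def by simp
      qed
      ultimately show "p \<in> (SIGMA \<alpha>:SA. SB \<alpha>)" unfolding pe by simp
    qed
    thus ?thesis by (rule finite_subset) (use finSA finSB in auto)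
  qed
  have sup: "(SIGMA \<alpha>:SA. SB \<alpha>) \<subseteq> I"
  proof
    fix p assume p: "p \<in> (SIGMA \<alpha>:SA. SB \<alpha>)"
    obtain \<alpha> \<beta> where pe: "p = (\<alpha>,\<beta>)" and al: "\<alpha> \<in> SA" and be: "\<beta> \<in> SB \<alpha>" using p by auto
    have aeX: "\<alpha> \<le> eX" using al eX unfolding SA_def by (auto split: if_splits)
    have Eg: "EE \<eta> (int eT) eX \<alpha> \<ge> int eT" by (rule EE_eps_ge[OF aeX])
    have ka: "\<alpha> \<le> q - 1 \<or> \<alpha> = eX" using al unfolding SA_def by (auto split: if_splits)
    have kb: "\<beta> \<le> q - 1 \<or> int \<beta> = EE \<eta> (int eT) eX \<alpha>"
      using be Eg unfolding SB_def by (auto split: if_splits)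
    have d4: "a \<le> \<alpha>" using al V(1) eX unfolding SA_def by (auto split: if_splits)
    have d3: "dX - a \<le> eX - \<alpha>" using al eX unfolding SA_def by (auto split: if_splits)
    have Ea: "EE \<eta> dT dX a \<le> dT + int \<eta> * int dX" by (rule EE_le_delta)
    have d2: "b \<le> \<beta>"
    proof -
      have "int b \<le> int eT" using V(3) Ea eT d by linarith
      thus ?thesis using be Eg unfolding SB_def by (auto split: if_splits)
    qed
    have d1: "nat (EE \<eta> dT dX a - int b) \<le> nat (EE \<eta> (int eT) eX \<alpha> - int \<beta>)"
    proof (cases "\<beta> < q")
      case True
      have "EE \<eta> dT dX a - int b \<le> EE \<eta> (int eT) eX \<alpha> - int \<beta>"
        using Ea Eg True eT d by linarith
      thus ?thesis by (rule nat_mono)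
    next
      case False
      hence "int b = EE \<eta> dT dX a" using be unfolding SB_def by (auto split: if_splits)
      thus ?thesis by simp
    qed
    show "p \<in> I" unfolding pe I_def Kstar_eps[OF q2 eTq eXq] dvd_Mmono
      using ka kb d1 d2 d3 d4 by simp
  qed
  have cSB: "card (SB \<alpha>) = bcv q \<eta> dT dX a b" if "\<alpha> \<in> SA" for \<alpha>
  proof -
    have aeX: "\<alpha> \<le> eX" using that eX unfolding SA_def by (auto split: if_splits)
    have "EE \<eta> (int eT) eX \<alpha> \<ge> int q" using EE_eps_ge[OF aeX, where \<eta>=\<eta> and eT="int eT"] eT by linarith
    hence "nat (EE \<eta> (int eT) eX \<alpha>) \<notin> {b..<q}" by auto
    hence "card (SB \<alpha>) = card {b..<q} + card (if int b = EE \<eta> dT dX a then {nat (EE \<eta> (int eT) eX \<alpha>)} else {})"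
      unfolding SB_def by (intro card_Un_disjoint) auto
    thus ?thesis unfolding bcv_def by (simp split: if_splits)
  qed
  have cSA: "card SA = ac q dX a"
  proof -
    have "eX \<notin> {a..<q}" using eX by auto
    hence "card SA = card {a..<q} + card (if a = dX then {eX} else {})"
      unfolding SA_def by (intro card_Un_disjoint) auto
    thus ?thesis unfolding ac_def by (simp split: if_splits)
  qed
  have "I = (SIGMA \<alpha>:SA. SB \<alpha>)"
  proof (rule antisym[OF _ sup])
    show "I \<subseteq> (SIGMA \<alpha>:SA. SB \<alpha>)"
    proof
      fix p assume p: "p \<in> I"
      obtain \<alpha> \<beta> where pe: "p = (\<alpha>,\<beta>)" by (cases p) auto
      have k: "(\<alpha> \<le> q - 1 \<or> \<alpha> = eX) \<and> (\<beta> \<le> q - 1 \<or> int \<beta> = EE \<eta> (int eT) eX \<alpha>)"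
        using p unfolding pe I_def Kstar_eps[OF q2 eTq eXq] by simp
      have dv: "nat (EE \<eta> dT dX a - int b) \<le> nat (EE \<eta> (int eT) eX \<alpha> - int \<beta>)" "b \<le> \<beta>" "dX - a \<le> eX - \<alpha>" "a \<le> \<alpha>"
        using p unfolding pe I_def dvd_Mmono by auto
      have "\<alpha> \<in> SA"
      proof (cases "\<alpha> \<le> q - 1")
        case True thus ?thesis unfolding SA_def using dv(4) q2 by auto
      next
        case False
        hence "\<alpha> = eX" using k by simp
        hence "a = dX" using dv(3) V(1) by simp
        thus ?thesis unfolding SA_def using \<open>\<alpha> = eX\<close> by simp
      qed
      moreover have "\<beta> \<in> SB \<alpha>"
      proof (cases "\<beta> \<le> q - 1")
        case True thus ?thesis unfolding SB_def using dv(2) q2 by auto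
      next
        case False
        hence be: "int \<beta> = EE \<eta> (int eT) eX \<alpha>" using k by simp
        hence "nat (EE \<eta> dT dX a - int b) = 0" using dv(1) by simp
        hence "int b = EE \<eta> dT dX a" using V(3) by simp
        moreover have "\<beta> = nat (EE \<eta> (int eT) eX \<alpha>)" using be by simp
        ultimately show ?thesis unfolding SB_def by simp
      qed
      ultimately show "p \<in> (SIGMA \<alpha>:SA. SB \<alpha>)" unfolding pe by simp
    qed
  qed
  hence "card I = (\<Sum>\<alpha>\<in>SA. card (SB \<alpha>))" using finSA finSB by simp
  also have "\<dots> = (\<Sum>\<alpha>\<in>SA. bcv q \<eta> dT dX a b)" by (rule sum.cong) (use cSB in auto)
  also have "\<dots> = ac q dX a * bcv q \<eta> dT dX a b" using cSA by simp
  finally show ?thesis unfolding cnt_eq_card I_def .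
qed


definition ev :: "mono \<Rightarrow> ('a::field \<times> 'a \<times> 'a \<times> 'a) \<Rightarrow> 'a" where
  "ev m P = (case m of (c1,c2,d1,d2) \<Rightarrow> case P of (t1,t2,x1,x2) \<Rightarrow> t1^c1 * t2^c2 * x1^d1 * x2^d2)"

definition madd :: "mono \<Rightarrow> mono \<Rightarrow> mono" where
  "madd m n = (case m of (c1,c2,d1,d2) \<Rightarrow> case n of (c1',c2',d1',d2') \<Rightarrow> (c1+c1', c2+c2', d1+d1', d2+d2'))"

lemma eval_ev: "eval_poly \<eta> dT dX c P = (\<Sum>m\<in>hmonos \<eta> dT dX. c m * ev m P)"
proof -
  obtain t1 t2 x1 x2 where P: "P = (t1,t2,x1,x2)" by (cases P) auto
  show ?thesis unfolding eval_poly_def ev_def P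
    by (auto intro!: sum.cong simp: mult.assoc split: prod.splits)
qed

lemma ev_madd: "ev (madd m n) P = ev m P * ev n P"
  unfolding ev_def madd_def by (auto simp: power_add mult_ac split: prod.splits)

lemma bideg_madd: "bideg \<eta> (madd m n) = (fst (bideg \<eta> m) + fst (bideg \<eta> n), snd (bideg \<eta> m) + snd (bideg \<eta> n))"
  unfolding bideg_def madd_def by (auto simp: algebra_simps split: prod.splits)

definition inR :: "nat \<Rightarrow> int \<Rightarrow> nat \<Rightarrow> (('a::field \<times> 'a \<times> 'a \<times> 'a) \<Rightarrow> 'a) \<Rightarrow> bool" where
  "inR \<eta> dT dX g \<longleftrightarrow> (\<exists>c. \<forall>P. eval_poly \<eta> dT dX c P = g P)"

lemma inR_mult:
  assumes g: "inR \<eta> d1 e1 g" and h: "inR \<eta> d2 e2 h"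
  shows "inR \<eta> (d1 + d2) (e1 + e2) (\<lambda>P. g P * h P)"
proof -
  obtain c1 where c1: "\<And>P. eval_poly \<eta> d1 e1 c1 P = g P" using g unfolding inR_def by blast
  obtain c2 where c2: "\<And>P. eval_poly \<eta> d2 e2 c2 P = h P" using h unfolding inR_def by blast
  let ?H1 = "hmonos \<eta> d1 e1" and ?H2 = "hmonos \<eta> d2 e2" and ?H = "hmonos \<eta> (d1+d2) (e1+e2)"
  let ?S = "?H1 \<times> ?H2"
  define c where "c m = (\<Sum>p\<in>{p\<in>?S. madd (fst p) (snd p) = m}. c1 (fst p) * c2 (snd p))" for m
  have img: "(\<lambda>p. madd (fst p) (snd p)) ` ?S \<subseteq> ?H"
    unfolding hmonos_def by (auto simp: bideg_madd)
  have "eval_poly \<eta> (d1+d2) (e1+e2) c P = g P * h P" for P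
  proof -
    have "eval_poly \<eta> (d1+d2) (e1+e2) c P = (\<Sum>m\<in>?H. c m * ev m P)" by (rule eval_ev)
    also have "\<dots> = (\<Sum>m\<in>?H. (\<Sum>p\<in>{p\<in>?S. madd (fst p) (snd p) = m}. c1 (fst p) * c2 (snd p) * ev (madd (fst p) (snd p)) P))"
      unfolding c_def by (rule sum.cong[OF refl]) (simp add: sum_distrib_right)
    also have "\<dots> = (\<Sum>p\<in>?S. c1 (fst p) * c2 (snd p) * ev (madd (fst p) (snd p)) P)"
      by (rule sum.group) (use img in auto)
    also have "\<dots> = (\<Sum>p\<in>?S. (c1 (fst p) * ev (fst p) P) * (c2 (snd p) * ev (snd p) P))"
      by (rule sum.cong[OF refl]) (simp add: ev_madd mult_ac)
    also have "\<dots> = (\<Sum>m\<in>?H1. c1 m * ev m P) * (\<Sum>n\<in>?H2. c2 n * ev n P)"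
      by (simp add: sum_product sum.cartesian_product case_prod_beta)
    also have "\<dots> = g P * h P" using c1[of P] c2[of P] by (simp add: eval_ev)
    finally show ?thesis .
  qed
  thus ?thesis unfolding inR_def by blast
qed

lemma inR_lin:
  assumes g: "inR \<eta> d e g" and h: "inR \<eta> d e h"
  shows "inR \<eta> d e (\<lambda>P. g P + a * h P)"
proof -
  obtain c1 where c1: "\<And>P. eval_poly \<eta> d e c1 P = g P" using g unfolding inR_def by blast
  obtain c2 where c2: "\<And>P. eval_poly \<eta> d e c2 P = h P" using h unfolding inR_def by blast
  have "eval_poly \<eta> d e (\<lambda>m. c1 m + a * c2 m) P = g P + a * h P" for P
  proof -
    have "eval_poly \<eta> d e (\<lambda>m. c1 m + a * c2 m) P = (\<Sum>m\<in>hmonos \<eta> d e. c1 m * ev m P + a * (c2 m * ev m P))"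
      unfolding eval_ev by (rule sum.cong) (auto simp: algebra_simps)
    also have "\<dots> = (\<Sum>m\<in>hmonos \<eta> d e. c1 m * ev m P) + a * (\<Sum>m\<in>hmonos \<eta> d e. c2 m * ev m P)"
      by (simp add: sum.distrib sum_distrib_left)
    also have "\<dots> = g P + a * h P" using c1[of P] c2[of P] by (simp add: eval_ev)
    finally show ?thesis .
  qed
  thus ?thesis unfolding inR_def by blast
qed

lemma inR_mono:
  assumes "bideg \<eta> m = (d, e)"
  shows "inR \<eta> d e (ev m)"
proof -
  have mH: "m \<in> hmonos \<eta> d e" using assms unfolding hmonos_def by simp
  have "eval_poly \<eta> d e (\<lambda>m'. if m' = m then 1 else 0) P = ev m P" for P
  proof -
    have "eval_poly \<eta> d e (\<lambda>m'. if m' = m then 1 else 0) P = (\<Sum>m'\<in>hmonos \<eta> d e. if m' = m then ev m' P else 0)"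
      unfolding eval_ev by (rule sum.cong) auto
    also have "\<dots> = ev m P" using mH by (simp add: sum.delta')
    finally show ?thesis .
  qed
  thus ?thesis unfolding inR_def by blast
qed

lemma inR_cong: "inR \<eta> d e g \<Longrightarrow> d = d' \<Longrightarrow> e = e' \<Longrightarrow> (\<And>P. g P = g' P) \<Longrightarrow> inR \<eta> d' e' g'"
  unfolding inR_def by auto


lemma ev_simp: "ev (c1,c2,d1,d2) P = fst P ^ c1 * fst (snd P) ^ c2 * fst (snd (snd P)) ^ d1 * snd (snd (snd P)) ^ d2"
  by (cases P) (simp add: ev_def)

lemma inR_one: "inR \<eta> 0 0 (\<lambda>P. 1)"
  using inR_mono[of \<eta> "(0,0,0,0)" 0 0] by (rule inR_cong) (auto simp: bideg_def ev_simp)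

lemma inR_T1: "inR \<eta> 1 0 (\<lambda>P. fst P)"
  using inR_mono[of \<eta> "(1,0,0,0)" 1 0] by (rule inR_cong) (auto simp: bideg_def ev_simp)

lemma inR_Tlin: "inR \<eta> 1 0 (\<lambda>P. fst (snd P) - a * fst P)"
proof -
  have "inR \<eta> 1 0 (\<lambda>P. ev (0,1,0,0) P + (- a) * ev (1,0,0,0) P)"
    by (rule inR_lin; rule inR_mono) (auto simp: bideg_def)
  thus ?thesis by (rule inR_cong) (auto simp: ev_simp)
qed

lemma inR_X1: "inR \<eta> (- int \<eta>) 1 (\<lambda>P. fst (snd (snd P)))"
  using inR_mono[of \<eta> "(0,0,1,0)" "- int \<eta>" 1] by (rule inR_cong) (auto simp: bideg_def ev_simp)

lemma inR_X2: "inR \<eta> 0 1 (\<lambda>P. snd (snd (snd P)))"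
  using inR_mono[of \<eta> "(0,0,0,1)" 0 1] by (rule inR_cong) (auto simp: bideg_def ev_simp)

lemma inR_Xlin: "inR \<eta> 0 1 (\<lambda>P. snd (snd (snd P)) - b * fst P ^ \<eta> * fst (snd (snd P)))"
proof -
  have "inR \<eta> 0 1 (\<lambda>P. ev (0,0,0,1) P + (- b) * ev (\<eta>,0,1,0) P)"
    by (rule inR_lin; rule inR_mono) (auto simp: bideg_def)
  thus ?thesis by (rule inR_cong) (auto simp: ev_simp mult.assoc)
qed

lemma inR_pow:
  assumes "inR \<eta> d e g"
  shows "inR \<eta> (int n * d) (n * e) (\<lambda>P. g P ^ n)"
proof (induction n)
  case 0 show ?case using inR_one by (rule inR_cong) auto
next
  case (Suc n)
  have "inR \<eta> (int n * d + d) (n * e + e) (\<lambda>P. g P ^ n * g P)"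
    by (rule inR_mult[OF Suc.IH assms])
  thus ?case by (rule inR_cong) (auto simp: algebra_simps)
qed

lemma inR_prod:
  assumes fin: "finite S" and g: "\<And>i. i \<in> S \<Longrightarrow> inR \<eta> d e (g i)"
  shows "inR \<eta> (int (card S) * d) (card S * e) (\<lambda>P. \<Prod>i\<in>S. g i P)"
  using fin g
proof (induction S rule: finite_induct)
  case empty show ?case using inR_one by (rule inR_cong) auto
next
  case (insert x F)
  have "inR \<eta> (d + int (card F) * d) (e + card F * e) (\<lambda>P. g x P * (\<Prod>i\<in>F. g i P))"
    by (rule inR_mult) (use insert in auto)
  thus ?case by (rule inR_cong) (use insert in \<open>auto simp: algebra_simps\<close>)
qed

definition gT :: "nat \<Rightarrow> 'a set \<Rightarrow> ('a::field \<times> 'a \<times> 'a \<times> 'a) \<Rightarrow> 'a" where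
  "gT s Z P = fst P ^ s * (\<Prod>\<alpha>\<in>Z. fst (snd P) - \<alpha> * fst P)"

definition gX :: "nat \<Rightarrow> nat \<Rightarrow> nat \<Rightarrow> 'a set \<Rightarrow> ('a::field \<times> 'a \<times> 'a \<times> 'a) \<Rightarrow> 'a" where
  "gX \<eta> s1 s2 B P = fst (snd (snd P)) ^ s1 * snd (snd (snd P)) ^ s2 *
      (\<Prod>\<beta>\<in>B. snd (snd (snd P)) - \<beta> * fst P ^ \<eta> * fst (snd (snd P)))"

lemma construct:
  fixes Z B :: "'a::{finite,field} set"
  assumes "int s + int (card Z) - int \<eta> * int s1 = dT" "s1 + s2 + card B = dX"
  shows "inR \<eta> dT dX (\<lambda>P. gT s Z P * gX \<eta> s1 s2 B P)"
proof -
  have T: "inR \<eta> (int s * 1 + int (card Z) * 1) (s * 0 + card Z * 0) (gT s Z)"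
    unfolding gT_def
    by (rule inR_mult[OF inR_pow[OF inR_T1] inR_prod[OF finite inR_Tlin]])
  have X1: "inR \<eta> (int s1 * (- int \<eta>) + int s2 * 0) (s1 * 1 + s2 * 1)
        (\<lambda>P. fst (snd (snd P)) ^ s1 * snd (snd (snd P)) ^ s2)"
    by (rule inR_mult[OF inR_pow[OF inR_X1] inR_pow[OF inR_X2]])
  have X: "inR \<eta> (int s1 * (- int \<eta>) + int s2 * 0 + int (card B) * 0) (s1 * 1 + s2 * 1 + card B * 1) (gX \<eta> s1 s2 B)"
    unfolding gX_def by (rule inR_mult[OF X1 inR_prod[OF finite inR_Xlin]])
  show ?thesis
    by (rule inR_cong[OF inR_mult[OF T X]]) (use assms in \<open>auto simp: algebra_simps\<close>)
qed


lemma hweight_g: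
  fixes c :: "mono \<Rightarrow> 'a::{finite,field}"
  assumes e: "\<And>P. eval_poly \<eta> dT dX c P = g P"
  shows "hweight (cw \<eta> dT dX c) = (\<Sum>t\<in>P1. card {x\<in>P1. g (fst t, snd t, fst x, snd x) \<noteq> 0})"
proof -
  have "hweight (cw \<eta> dT dX c) = (\<Sum>t\<in>P1. card {x\<in>P1. hv dX (Qt \<eta> dT dX c t) x \<noteq> 0})"
    by (rule hweight_cw)
  also have "\<dots> = (\<Sum>t\<in>P1. card {x\<in>P1. g (fst t, snd t, fst x, snd x) \<noteq> 0})"
  proof (rule sum.cong[OF refl])
    fix t :: "'a \<times> 'a" assume t: "t \<in> P1"
    have "{x\<in>P1. hv dX (Qt \<eta> dT dX c t) x \<noteq> 0} = {x\<in>P1. g (fst t, snd t, fst x, snd x) \<noteq> 0}"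
    proof (rule Collect_cong)
      fix x :: "'a \<times> 'a"
      show "(x \<in> P1 \<and> hv dX (Qt \<eta> dT dX c t) x \<noteq> 0) = (x \<in> P1 \<and> g (fst t, snd t, fst x, snd x) \<noteq> 0)"
      proof (cases "x \<in> P1")
        case True
        have "eval_poly \<eta> dT dX c (fst t, snd t, fst x, snd x) = hv dX (Qt \<eta> dT dX c (fst t, snd t)) (fst x, snd x)"
          by (rule eval_struct) (use t True in auto)
        thus ?thesis using e[of "(fst t, snd t, fst x, snd x)"] by simp
      qed simp
    qed
    thus "card {x\<in>P1. hv dX (Qt \<eta> dT dX c t) x \<noteq> 0} = card {x\<in>P1. g (fst t, snd t, fst x, snd x) \<noteq> 0}"
      by simp
  qed
  finally show ?thesis .
qed

lemma cw_nonzero_g: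
  fixes c :: "mono \<Rightarrow> 'a::{finite,field}"
  assumes e: "\<And>P. eval_poly \<eta> dT dX c P = g P" and t: "t \<in> P1" and x: "x \<in> P1"
    and nz: "g (fst t, snd t, fst x, snd x) \<noteq> 0"
  shows "cw \<eta> dT dX c \<noteq> (\<lambda>_. 0)"
proof
  assume z: "cw \<eta> dT dX c = (\<lambda>_. 0)"
  have "(fst t, snd t, fst x, snd x) \<in> hirz_points" unfolding hirz_eq using t x by force
  hence "cw \<eta> dT dX c (fst t, snd t, fst x, snd x) = g (fst t, snd t, fst x, snd x)"
    unfolding cw_def using e by simp
  thus False using z nz by simp
qed

lemma gT_aff: "gT s Z (1, \<alpha>, x1, x2) = (\<Prod>\<alpha>'\<in>Z. \<alpha> - \<alpha>')"
  unfolding gT_def by simp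

lemma gT_inf: "gT s Z (0, 1, x1, x2) = (0::'a::field) ^ s"
  unfolding gT_def by simp

lemma gX_inf: "gX \<eta> s1 s2 B (t1, t2, 0, 1) = (0::'a::field) ^ s1"
  unfolding gX_def by simp

lemma gX_aff:
  assumes "t1 ^ \<eta> = (1::'a::field)"
  shows "gX \<eta> s1 s2 B (t1, t2, 1, b) = b ^ s2 * (\<Prod>\<beta>\<in>B. b - \<beta>)"
  unfolding gX_def using assms by simp

lemma prod_nz_iff:
  fixes Z :: "'a::{finite,field} set"
  shows "(\<Prod>\<alpha>'\<in>Z. \<alpha> - \<alpha>') \<noteq> 0 \<longleftrightarrow> \<alpha> \<notin> Z"
  by (simp add: prod_zero_iff)

lemma fiber_bound:
  fixes B :: "'a::{finite,field} set"
  assumes t: "t \<in> P1" and cond: "fst t ^ \<eta> = 1 \<or> (B = {} \<and> s2 = 0)"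
  shows "card {x\<in>P1. gX \<eta> s1 s2 B (fst t, snd t, fst x, snd x) \<noteq> 0}
     \<le> card {b. b \<notin> B \<and> (s2 = 0 \<or> b \<noteq> 0)} + (if s1 = 0 then 1 else 0)"
proof -
  have spl: "card {x\<in>P1. gX \<eta> s1 s2 B (fst t, snd t, fst x, snd x) \<noteq> 0}
     = card {b. gX \<eta> s1 s2 B (fst t, snd t, 1, b) \<noteq> 0} + (if gX \<eta> s1 s2 B (fst t, snd t, 0, 1) \<noteq> 0 then 1 else 0)"
    using card_P1_split[of "\<lambda>x. gX \<eta> s1 s2 B (fst t, snd t, fst x, snd x) \<noteq> 0"] by simp
  have sub: "{b. gX \<eta> s1 s2 B (fst t, snd t, 1, b) \<noteq> 0} \<subseteq> {b. b \<notin> B \<and> (s2 = 0 \<or> b \<noteq> 0)}"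
  proof
    fix b assume b: "b \<in> {b. gX \<eta> s1 s2 B (fst t, snd t, 1, b) \<noteq> 0}"
    show "b \<in> {b. b \<notin> B \<and> (s2 = 0 \<or> b \<noteq> 0)}"
    proof (cases "fst t ^ \<eta> = 1")
      case True
      hence "b ^ s2 * (\<Prod>\<beta>\<in>B. b - \<beta>) \<noteq> 0" using b gX_aff[OF True] by simp
      thus ?thesis by (auto simp: prod_zero_iff)
    next
      case False thus ?thesis using cond by simp
    qed
  qed
  have "card {b. gX \<eta> s1 s2 B (fst t, snd t, 1, b) \<noteq> 0} \<le> card {b. b \<notin> B \<and> (s2 = 0 \<or> b \<noteq> 0)}"
    by (rule card_mono[OF _ sub]) simp
  moreover have "(if gX \<eta> s1 s2 B (fst t, snd t, 0, 1) \<noteq> 0 then 1 else 0) \<le> (if s1 = 0 then 1 else (0::nat))"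
    unfolding gX_inf by simp
  ultimately show ?thesis using spl by linarith
qed

lemma gT_fib: "gT s Z (t1, t2, x1, x2) = gT s Z (t1, t2, 0, 0)"
  unfolding gT_def by simp

lemma weight_bound:
  fixes c :: "mono \<Rightarrow> 'a::{finite,field}" and Z B :: "'a set"
  assumes e: "\<And>P. eval_poly \<eta> dT dX c P = gT s Z P * gX \<eta> s1 s2 B P"
    and cond: "s = 0 \<Longrightarrow> (\<eta> = 0 \<or> (B = {} \<and> s2 = 0))"
  shows "hweight (cw \<eta> dT dX c) \<le> ((CARD('a) - card Z) + (if s = 0 then 1 else 0)) *
      (card {b. b \<notin> B \<and> (s2 = 0 \<or> b \<noteq> 0)} + (if s1 = 0 then 1 else 0))"
proof -
  define FB where "FB = card {b::'a. b \<notin> B \<and> (s2 = 0 \<or> b \<noteq> 0)} + (if s1 = 0 then 1 else 0)"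
  let ?gT = "\<lambda>t::'a\<times>'a. gT s Z (fst t, snd t, 0, 0)"
  have fibt: "card {x\<in>P1. gT s Z (fst t, snd t, fst x, snd x) * gX \<eta> s1 s2 B (fst t, snd t, fst x, snd x) \<noteq> 0}
       \<le> (if ?gT t \<noteq> 0 then FB else 0)" if t: "t \<in> P1" for t
  proof (cases "?gT t \<noteq> 0")
    case True
    have cnd: "fst t ^ \<eta> = 1 \<or> (B = {} \<and> s2 = 0)"
      using t proof (rule P1_cases)
      fix a assume "t = (1,a)" thus ?thesis by simp
    next
      assume t01: "t = (0,1)"
      hence "(0::'a) ^ s \<noteq> 0" using True gT_inf[of s Z 0 0] by simp
      hence "s = 0" by (cases s) auto
      hence "\<eta> = 0 \<or> (B = {} \<and> s2 = 0)" by (rule cond)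
      thus ?thesis using t01 by auto
    qed
    have "{x\<in>P1. gT s Z (fst t, snd t, fst x, snd x) * gX \<eta> s1 s2 B (fst t, snd t, fst x, snd x) \<noteq> 0}
        = {x\<in>P1. gX \<eta> s1 s2 B (fst t, snd t, fst x, snd x) \<noteq> 0}"
      using True by (subst gT_fib) auto
    also have "card \<dots> \<le> FB" unfolding FB_def by (rule fiber_bound[OF t cnd])
    finally show ?thesis using True by simp
  next
    case False
    hence "{x\<in>P1. gT s Z (fst t, snd t, fst x, snd x) * gX \<eta> s1 s2 B (fst t, snd t, fst x, snd x) \<noteq> 0} = {}"
      by (subst gT_fib) auto
    thus ?thesis using False by simp
  qed
  have "hweight (cw \<eta> dT dX c) = (\<Sum>t\<in>P1. card {x\<in>P1. gT s Z (fst t, snd t, fst x, snd x) * gX \<eta> s1 s2 B (fst t, snd t, fst x, snd x) \<noteq> 0})"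
    by (rule hweight_g) (rule e)
  also have "\<dots> \<le> (\<Sum>t\<in>P1. if ?gT t \<noteq> 0 then FB else 0)" by (rule sum_mono) (rule fibt)
  also have "\<dots> = (\<Sum>t\<in>{t\<in>P1. ?gT t \<noteq> 0}. FB)" by (rule sum.inter_filter[symmetric]) simp
  also have "\<dots> = card {t\<in>P1. ?gT t \<noteq> 0} * FB" by simp
  also have "card {t\<in>P1. ?gT t \<noteq> 0} = (CARD('a) - card Z) + (if s = 0 then 1 else 0)"
  proof -
    have "card {t\<in>P1. ?gT t \<noteq> 0} = card {a. ?gT (1,a) \<noteq> 0} + (if ?gT (0,1) \<noteq> 0 then 1 else 0)"
      by (rule card_P1_split)
    moreover have "{a. ?gT (1,a) \<noteq> 0} = UNIV - Z" by (auto simp: gT_aff prod_zero_iff)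
    moreover have "card (UNIV - Z) = CARD('a) - card Z" by (simp add: card_Diff_subset)
    moreover have "(?gT (0,1) \<noteq> 0) = (s = 0)" using gT_inf[of s Z 0 0] by (cases s) auto
    ultimately show ?thesis by simp
  qed
  finally show ?thesis unfolding FB_def .
qed

lemma upper_gen:
  fixes Z B :: "'a::{finite,field} set"
  assumes deg: "int s + int (card Z) - int \<eta> * int s1 = dT" "s1 + s2 + card B = dX"
    and cond: "s = 0 \<Longrightarrow> (\<eta> = 0 \<or> (B = {} \<and> s2 = 0))"
    and Zne: "\<alpha> \<notin> Z" and xw: "s1 = 0 \<or> (b \<notin> B \<and> s2 = 0)"
  shows "\<exists>c::mono \<Rightarrow> 'a. cw \<eta> dT dX c \<noteq> (\<lambda>_. 0) \<and> hweight (cw \<eta> dT dX c) \<le> ((CARD('a) - card Z) + (if s = 0 then 1 else 0)) *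
      (card {b. b \<notin> B \<and> (s2 = 0 \<or> b \<noteq> 0)} + (if s1 = 0 then 1 else 0))"
proof -
  have "inR \<eta> dT dX (\<lambda>P. gT s Z P * gX \<eta> s1 s2 B P)" by (rule construct[OF deg])
  then obtain c :: "mono \<Rightarrow> 'a" where e: "\<And>P. eval_poly \<eta> dT dX c P = gT s Z P * gX \<eta> s1 s2 B P"
    unfolding inR_def by blast
  have W: "hweight (cw \<eta> dT dX c) \<le> ((CARD('a) - card Z) + (if s = 0 then 1 else 0)) *
      (card {b. b \<notin> B \<and> (s2 = 0 \<or> b \<noteq> 0)} + (if s1 = 0 then 1 else 0))"
    by (rule weight_bound[OF e cond])
  have gTnz: "gT s Z (1, \<alpha>, x1, x2) \<noteq> 0" for x1 x2 using Zne by (simp add: gT_aff prod_zero_iff)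
  have nz: "cw \<eta> dT dX c \<noteq> (\<lambda>_. 0)"
  proof (cases "s1 = 0")
    case True
    have "gX \<eta> s1 s2 B (1, \<alpha>, 0, 1) \<noteq> 0" unfolding gX_inf using True by simp
    hence "gT s Z (1, \<alpha>, 0, 1) * gX \<eta> s1 s2 B (1, \<alpha>, 0, 1) \<noteq> 0" using gTnz by simp
    thus ?thesis using cw_nonzero_g[OF e, of "(1,\<alpha>)" "(0,1)"] by simp
  next
    case False
    hence b: "b \<notin> B" "s2 = 0" using xw by auto
    have "gX \<eta> s1 s2 B (1, \<alpha>, 1, b) = b ^ s2 * (\<Prod>\<beta>\<in>B. b - \<beta>)" by (rule gX_aff) simp
    hence "gX \<eta> s1 s2 B (1, \<alpha>, 1, b) \<noteq> 0" using b by (simp add: prod_zero_iff)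
    hence "gT s Z (1, \<alpha>, 1, b) * gX \<eta> s1 s2 B (1, \<alpha>, 1, b) \<noteq> 0" using gTnz by simp
    thus ?thesis using cw_nonzero_g[OF e, of "(1,\<alpha>)" "(1,b)"] by simp
  qed
  show ?thesis using W nz by blast
qed

lemma upper_constr:
  assumes eta: "\<eta> \<noteq> 1" and adX: "a \<le> dX" and Ea: "EE \<eta> dT dX a \<ge> 0"
    and av: "a \<le> CARD('a::{finite,field}) - 1 \<or> (a = dX \<and> dT \<ge> 0)"
    and cons: "nat (EE \<eta> dT dX a) \<ge> 1 \<or> \<eta> = 0 \<or> a = 0"
  shows "\<exists>c::mono \<Rightarrow> 'a. cw \<eta> dT dX c \<noteq> (\<lambda>_. 0) \<and>
     hweight (cw \<eta> dT dX c) \<le> ac CARD('a) dX a * ((CARD('a) - nat (EE \<eta> dT dX a)) + 1)"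
proof -
  let ?q = "CARD('a)"
  have q2: "?q \<ge> 2" by (rule card_field_ge2)
  define e where "e = nat (EE \<eta> dT dX a)"
  have ie: "int e = EE \<eta> dT dX a" unfolding e_def using Ea by simp
  obtain s and Z :: "'a set" where T: "s + card Z = e" "(?q - card Z) + (if s = 0 then 1 else 0) = (?q - e) + 1"
    "card Z < ?q" "s = 0 \<Longrightarrow> e = 0"
  proof (cases "e = 0")
    case True
    show ?thesis by (rule that[of 0 "{}"]) (use True q2 in auto)
  next
    case False
    have "min e ?q - 1 \<le> card (UNIV :: 'a set)" by simp
    then obtain Z :: "'a set" where Z: "card Z = min e ?q - 1" by (rule obtain_subset_with_card_n) blast
    show ?thesis
    proof (rule that[of "e - card Z" Z])
      show "e - card Z + card Z = e" using Z False by simp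
      show "e - card Z = 0 \<Longrightarrow> e = 0" using Z False by simp
      show "card Z < ?q" using Z q2 by simp
      show "(?q - card Z) + (if e - card Z = 0 then 1 else 0) = (?q - e) + 1"
        using Z False q2 by (cases "e \<le> ?q") auto
    qed
  qed
  obtain \<alpha> :: 'a where al: "\<alpha> \<notin> Z"
  proof -
    have "Z \<noteq> UNIV" using T(3) by auto
    thus ?thesis using that by blast
  qed
  obtain s1 s2 and B :: "'a set" and b :: 'a where X: "s1 + s2 + card B = dX"
    "card {b. b \<notin> B \<and> (s2 = 0 \<or> b \<noteq> 0)} + (if s1 = 0 then 1 else 0) = ac ?q dX a"
    "s1 = dX - a" "s1 = 0 \<or> (b \<notin> B \<and> s2 = 0)" "e = 0 \<Longrightarrow> \<eta> = 0 \<or> (B = {} \<and> s2 = 0)"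
  proof (cases "a < dX")
    case True
    hence aq: "a \<le> ?q - 1" using av by auto
    have "a \<le> card (UNIV :: 'a set)" using aq by simp
    then obtain B :: "'a set" where B: "card B = a" by (rule obtain_subset_with_card_n) blast
    have "B \<noteq> UNIV" using B aq q2 by auto
    then obtain b where b: "b \<notin> B" by blast
    have cB: "card {b. b \<notin> B \<and> (0 = (0::nat) \<or> b \<noteq> 0)} = ?q - a"
    proof -
      have "{b. b \<notin> B \<and> (0 = (0::nat) \<or> b \<noteq> 0)} = UNIV - B" by auto
      thus ?thesis using B by (simp add: card_Diff_subset)
    qed
    show ?thesis
    proof (rule that[of "dX - a" 0 B b])
      show "dX - a + 0 + card B = dX" using B True by simp
      show "card {b. b \<notin> B \<and> (0 = (0::nat) \<or> b \<noteq> 0)} + (if dX - a = 0 then 1 else 0) = ac ?q dX a"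
        using cB True unfolding ac_def by simp
      show "e = 0 \<Longrightarrow> \<eta> = 0 \<or> (B = {} \<and> 0 = (0::nat))"
        using cons B unfolding e_def by auto
    qed (use b in auto)
  next
    case False
    hence adX': "a = dX" using adX by simp
    show ?thesis
    proof (cases "dX < ?q")
      case True
      have "dX \<le> card (UNIV :: 'a set)" using True by simp
      then obtain B :: "'a set" where B: "card B = dX" by (rule obtain_subset_with_card_n) blast
      have cB: "card {b. b \<notin> B \<and> (0 = (0::nat) \<or> b \<noteq> 0)} = ?q - dX"
      proof -
        have "{b. b \<notin> B \<and> (0 = (0::nat) \<or> b \<noteq> 0)} = UNIV - B" by auto
        thus ?thesis using B by (simp add: card_Diff_subset)
      qed
      show ?thesis
      proof (rule that[of 0 0 B 0])
        show "0 + 0 + card B = dX" using B by simp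
        show "card {b. b \<notin> B \<and> (0 = (0::nat) \<or> b \<noteq> 0)} + (if (0::nat) = 0 then 1 else 0) = ac ?q dX a"
          using cB adX' unfolding ac_def by simp
        show "e = 0 \<Longrightarrow> \<eta> = 0 \<or> (B = {} \<and> 0 = (0::nat))"
          using cons B adX' unfolding e_def by auto
      qed (use adX' in auto)
    next
      case F2: False
      define B :: "'a set" where "B = UNIV - {0}"
      have cB: "card B = ?q - 1" unfolding B_def by (simp add: card_Diff_subset)
      have e0: "{b. b \<notin> B \<and> (dX - (?q - 1) = 0 \<or> b \<noteq> 0)} = {}"
        unfolding B_def using F2 q2 by auto
      show ?thesis
      proof (rule that[of 0 "dX - (?q - 1)" B 0])
        show "0 + (dX - (?q - 1)) + card B = dX" using cB F2 q2 by simp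
        show "card {b. b \<notin> B \<and> (dX - (?q - 1) = 0 \<or> b \<noteq> 0)} + (if (0::nat) = 0 then 1 else 0) = ac ?q dX a"
          unfolding e0 ac_def using adX' F2 by simp
        show "e = 0 \<Longrightarrow> \<eta> = 0 \<or> (B = {} \<and> dX - (?q - 1) = 0)"
          using cons adX' F2 q2 unfolding e_def by auto
      qed (use adX' in auto)
    qed
  qed
  have deg1: "int s + int (card Z) - int \<eta> * int s1 = dT"
  proof -
    have "int s + int (card Z) = EE \<eta> dT dX a" using T(1) ie by linarith
    moreover have "int s1 = int dX - int a" using X(3) adX by simp
    hence "int \<eta> * int s1 = int \<eta> * int dX - int \<eta> * int a" by (simp add: right_diff_distrib)
    ultimately show ?thesis unfolding EE_def by linarith
  qed
  have cnd: "s = 0 \<Longrightarrow> (\<eta> = 0 \<or> (B = {} \<and> s2 = 0))" using T(4) X(5) by blast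
  obtain c :: "mono \<Rightarrow> 'a" where c: "cw \<eta> dT dX c \<noteq> (\<lambda>_. 0)"
    "hweight (cw \<eta> dT dX c) \<le> ((?q - card Z) + (if s = 0 then 1 else 0)) *
      (card {b. b \<notin> B \<and> (s2 = 0 \<or> b \<noteq> 0)} + (if s1 = 0 then 1 else 0))"
    using upper_gen[OF deg1 X(1) cnd al X(4)] by blast
  have "hweight (cw \<eta> dT dX c) \<le> ac ?q dX a * ((?q - e) + 1)"
    using c(2) unfolding T(2) X(2) by (simp add: mult.commute)
  thus ?thesis using c(1) unfolding e_def by blast
qed


lemma arith_replace:
  fixes q a \<eta> :: nat
  assumes q2: "q \<ge> 2" and a1: "a \<ge> 1" and eta2: "\<eta> \<ge> 2" and aq: "a \<le> q - 1"
  shows "q * ((q - \<eta> * a) + 1) \<le> (q - a) * (q + 1)"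
proof (cases "\<eta> * a \<ge> q")
  case True
  hence "q * ((q - \<eta> * a) + 1) = q" by simp
  also have "q \<le> 1 * (q + 1)" by simp
  also have "\<dots> \<le> (q - a) * (q + 1)" using aq q2 by (intro mult_right_mono) auto
  finally show ?thesis .
next
  case False
  have "2 * a \<le> \<eta> * a" using eta2 by (intro mult_right_mono) auto
  hence a2: "2 * a < q" using False by linarith
  define r where "r = q - 2 * a"
  have qr: "q = 2 * a + r" unfolding r_def using a2 by simp
  have "q - \<eta> * a \<le> r" unfolding r_def using \<open>2 * a \<le> \<eta> * a\<close> by (rule diff_le_mono2)
  hence "q * ((q - \<eta> * a) + 1) \<le> q * (r + 1)" by (intro mult_left_mono) auto
  also have "\<dots> = (2 * a + r) * (r + 1)" using qr by simp
  also have "\<dots> \<le> (a + r) * (2 * a + r + 1)"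
  proof -
    have aa: "a \<le> a * a" using a1 by simp
    have e1: "(2 * a + r) * (r + 1) = 2 * (a * r) + 2 * a + r * r + r" by (simp add: algebra_simps)
    have e2: "(a + r) * (2 * a + r + 1) = 2 * (a * a) + 3 * (a * r) + a + r * r + r" by (simp add: algebra_simps)
    show ?thesis unfolding e1 e2 using aa by linarith
  qed
  also have "\<dots> = (q - a) * (q + 1)" using qr by simp
  finally show ?thesis .
qed

definition Gv :: "nat \<Rightarrow> nat \<Rightarrow> int \<Rightarrow> nat \<Rightarrow> nat" where
  "Gv q \<eta> dT dX = Min ((\<lambda>(a,b). ac q dX a * bcv q \<eta> dT dX a b) ` K_star q \<eta> dT dX)"

lemma K_fin:
  assumes eta: "\<eta> \<noteq> 1" and d: "dT + int \<eta> * int dX \<ge> 0" and q2: "q \<ge> 2"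
  shows "finite (K_star q \<eta> dT dX)"
proof (rule finite_subset)
  show "K_star q \<eta> dT dX \<subseteq> {..dX} \<times> {..nat (dT + int \<eta> * int dX)}"
  proof
    fix p assume p: "p \<in> K_star q \<eta> dT dX"
    obtain a b where pe: "p = (a,b)" by (cases p) auto
    note V = Kvalid[OF eta d q2 p[unfolded pe]]
    have "int b \<le> dT + int \<eta> * int dX" using V(3) EE_le_delta[of \<eta> dT dX a] by linarith
    hence "b \<le> nat (dT + int \<eta> * int dX)" by linarith
    thus "p \<in> {..dX} \<times> {..nat (dT + int \<eta> * int dX)}" using V(1) pe by simp
  qed
qed simp

lemma K_ne:
  assumes eta: "\<eta> \<noteq> 1" and d: "dT + int \<eta> * int dX \<ge> 0" and q2: "q \<ge> 2"
  shows "(0, nat (EE \<eta> dT dX 0)) \<in> K_star q \<eta> dT dX"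
  by (rule Kmem1[OF eta d _ _ _ q2]) (use d in \<open>auto simp: EE_def\<close>)

lemma Gv_le:
  assumes eta: "\<eta> \<noteq> 1" and d: "dT + int \<eta> * int dX \<ge> 0" and q2: "q \<ge> 2"
    and K: "(a,b) \<in> K_star q \<eta> dT dX"
  shows "Gv q \<eta> dT dX \<le> ac q dX a * bcv q \<eta> dT dX a b"
  unfolding Gv_def by (rule Min_le) (use K K_fin[OF eta d q2] in force)+

lemma Gv_in:
  assumes eta: "\<eta> \<noteq> 1" and d: "dT + int \<eta> * int dX \<ge> 0" and q2: "q \<ge> 2"
  shows "\<exists>a b. (a,b) \<in> K_star q \<eta> dT dX \<and> Gv q \<eta> dT dX = ac q dX a * bcv q \<eta> dT dX a b"
proof -
  have "Gv q \<eta> dT dX \<in> (\<lambda>(a,b). ac q dX a * bcv q \<eta> dT dX a b) ` K_star q \<eta> dT dX"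
    unfolding Gv_def by (rule Min_in) (use K_fin[OF eta d q2] K_ne[OF eta d q2] in auto)
  thus ?thesis by auto
qed

lemma lower_all:
  assumes eta: "\<eta> \<noteq> 1" and d: "dT + int \<eta> * int dX \<ge> 0"
    and w: "w \<in> hcode TYPE('a::{finite,field}) \<eta> dT dX" and nz: "w \<noteq> (\<lambda>_. 0)"
  shows "Gv CARD('a) \<eta> dT dX \<le> hweight w"
proof -
  let ?q = "CARD('a)"
  have q2: "?q \<ge> 2" by (rule card_field_ge2)
  obtain c :: "mono \<Rightarrow> 'a" where wc: "w = cw \<eta> dT dX c" using w unfolding hcode_eq by auto
  have ne: "\<exists>t\<in>P1. \<exists>x\<in>P1. hv dX (Qt \<eta> dT dX c t) x \<noteq> 0" by (rule cw_nonzero) (use nz wc in simp)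
  have "\<exists>a. (a, nat (EE \<eta> dT dX a)) \<in> K_star ?q \<eta> dT dX \<and>
     ac ?q dX a * ((?q - nat (EE \<eta> dT dX a)) + 1) \<le> WW \<eta> dT dX c"
  proof (cases "dX < ?q")
    case True thus ?thesis by (rule lowerA[OF eta d _ ne])
  next
    case False
    hence dXq: "dX \<ge> ?q" by simp
    show ?thesis
    proof (cases "\<exists>t0\<in>P1. rk \<eta> dT dX c dX t0 \<noteq> 0")
      case True thus ?thesis by (rule lowerB[OF dXq])
    next
      case False
      hence "\<forall>t\<in>P1. rk \<eta> dT dX c dX t = 0" by simp
      thus ?thesis by (rule lowerC[OF eta d dXq _ ne])
    qed
  qed
  then obtain a where a: "(a, nat (EE \<eta> dT dX a)) \<in> K_star ?q \<eta> dT dX"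
    "ac ?q dX a * ((?q - nat (EE \<eta> dT dX a)) + 1) \<le> WW \<eta> dT dX c" by blast
  have E: "EE \<eta> dT dX a \<ge> 0" using Kvalid(2)[OF eta d q2 a(1)] .
  have "bcv ?q \<eta> dT dX a (nat (EE \<eta> dT dX a)) = (?q - nat (EE \<eta> dT dX a)) + 1"
    unfolding bcv_def using E by simp
  hence "Gv ?q \<eta> dT dX \<le> ac ?q dX a * ((?q - nat (EE \<eta> dT dX a)) + 1)"
    using Gv_le[OF eta d q2 a(1)] by simp
  also have "\<dots> \<le> WW \<eta> dT dX c" by (rule a(2))
  also have "\<dots> = hweight w" unfolding wc by (rule hweight_cw[symmetric])
  finally show ?thesis .
qed

lemma bcv_ge:
  assumes eta: "\<eta> \<noteq> 1" and d: "dT + int \<eta> * int dX \<ge> 0" and q2: "q \<ge> 2"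
    and K: "(a,b) \<in> K_star q \<eta> dT dX"
  shows "(q - nat (EE \<eta> dT dX a)) + 1 \<le> bcv q \<eta> dT dX a b"
proof -
  note V = Kvalid[OF eta d q2 K]
  show ?thesis
  proof (cases "int b = EE \<eta> dT dX a")
    case True
    hence "b = nat (EE \<eta> dT dX a)" by simp
    thus ?thesis unfolding bcv_def using True by simp
  next
    case False
    hence bl: "b \<le> q - 1" "int b < EE \<eta> dT dX a" using V(3,5) by auto
    hence "b < nat (EE \<eta> dT dX a)" by linarith
    thus ?thesis unfolding bcv_def using False bl q2 by auto
  qed
qed

lemma upper_all:
  assumes eta: "\<eta> \<noteq> 1" and d: "dT + int \<eta> * int dX \<ge> 0"
  shows "\<exists>w. w \<in> hcode TYPE('a::{finite,field}) \<eta> dT dX \<and> w \<noteq> (\<lambda>_. 0) \<and> hweight w \<le> Gv CARD('a) \<eta> dT dX"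
proof -
  let ?q = "CARD('a)"
  have q2: "?q \<ge> 2" by (rule card_field_ge2)
  obtain a b where K: "(a,b) \<in> K_star ?q \<eta> dT dX" and G: "Gv ?q \<eta> dT dX = ac ?q dX a * bcv ?q \<eta> dT dX a b"
    using Gv_in[OF eta d q2] by blast
  note V = Kvalid[OF eta d q2 K]
  have bge: "(?q - nat (EE \<eta> dT dX a)) + 1 \<le> bcv ?q \<eta> dT dX a b" by (rule bcv_ge[OF eta d q2 K])
  have "\<exists>c::mono \<Rightarrow> 'a. cw \<eta> dT dX c \<noteq> (\<lambda>_. 0) \<and> hweight (cw \<eta> dT dX c) \<le> Gv ?q \<eta> dT dX"
  proof (cases "nat (EE \<eta> dT dX a) \<ge> 1 \<or> \<eta> = 0 \<or> a = 0")
    case True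
    obtain c :: "mono \<Rightarrow> 'a" where c: "cw \<eta> dT dX c \<noteq> (\<lambda>_. 0)"
      "hweight (cw \<eta> dT dX c) \<le> ac ?q dX a * ((?q - nat (EE \<eta> dT dX a)) + 1)"
      using upper_constr[OF eta V(1) V(2) V(4) True] by blast
    have "ac ?q dX a * ((?q - nat (EE \<eta> dT dX a)) + 1) \<le> ac ?q dX a * bcv ?q \<eta> dT dX a b"
      using bge by (rule mult_left_mono) simp
    thus ?thesis using c G by auto
  next
    case False
    hence E0: "EE \<eta> dT dX a = 0" and eta2: "\<eta> \<ge> 2" and a1: "a \<ge> 1" using V(2) eta by auto
    have dX0: "dX \<noteq> 0" using a1 V(1) by simp
    have E00: "EE \<eta> dT dX 0 = int \<eta> * int a" using E0 unfolding EE_def by simp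
    hence nE0: "nat (EE \<eta> dT dX 0) = \<eta> * a" by (simp add: nat_mult_distrib)
    have cons0: "nat (EE \<eta> dT dX 0) \<ge> 1 \<or> \<eta> = 0 \<or> (0::nat) = 0" by simp
    obtain c :: "mono \<Rightarrow> 'a" where c: "cw \<eta> dT dX c \<noteq> (\<lambda>_. 0)"
      "hweight (cw \<eta> dT dX c) \<le> ac ?q dX 0 * ((?q - nat (EE \<eta> dT dX 0)) + 1)"
      using upper_constr[OF eta _ _ _ cons0] E00 by auto
    have ac0: "ac ?q dX 0 = ?q" unfolding ac_def using dX0 by simp
    have bq: "?q + 1 \<le> bcv ?q \<eta> dT dX a b" using bge E0 by simp
    have "?q * ((?q - \<eta> * a) + 1) \<le> ac ?q dX a * bcv ?q \<eta> dT dX a b"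
    proof (cases "a \<le> ?q - 1")
      case True
      have "?q * ((?q - \<eta> * a) + 1) \<le> (?q - a) * (?q + 1)" by (rule arith_replace[OF q2 a1 eta2 True])
      also have "\<dots> \<le> ac ?q dX a * (?q + 1)" unfolding ac_def by (intro mult_right_mono) auto
      also have "\<dots> \<le> ac ?q dX a * bcv ?q \<eta> dT dX a b" using bq by (rule mult_left_mono) simp
      finally show ?thesis .
    next
      case False
      hence adX: "a = dX" and aq: "a \<ge> ?q" using V(4) by auto
      have acv: "ac ?q dX a = 1" unfolding ac_def using adX aq by simp
      have "2 * ?q \<le> \<eta> * a" using eta2 aq by (intro mult_le_mono) auto
      hence "?q * ((?q - \<eta> * a) + 1) = ?q" by simp
      also have "\<dots> \<le> bcv ?q \<eta> dT dX a b" using bq by simp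
      finally show ?thesis using acv by simp
    qed
    thus ?thesis using c ac0 nE0 G by auto
  qed
  then obtain c :: "mono \<Rightarrow> 'a" where c: "cw \<eta> dT dX c \<noteq> (\<lambda>_. 0)" "hweight (cw \<eta> dT dX c) \<le> Gv ?q \<eta> dT dX"
    by blast
  have "cw \<eta> dT dX c \<in> hcode TYPE('a) \<eta> dT dX" unfolding hcode_eq by simp
  thus ?thesis using c by blast
qed

lemma hdist_eq:
  assumes eta: "\<eta> \<noteq> 1" and d: "dT + int \<eta> * int dX \<ge> 0"
  shows "hdist TYPE('a::{finite,field}) \<eta> dT dX = Gv CARD('a) \<eta> dT dX"
proof -
  define S where "S = {hweight w | w. w \<in> hcode TYPE('a) \<eta> dT dX \<and> w \<noteq> (\<lambda>_. 0)}"
  have finS: "finite S"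
  proof (rule finite_subset)
    show "S \<subseteq> {..card (UNIV :: ('a \<times> 'a \<times> 'a \<times> 'a) set)}"
    proof
      fix n assume "n \<in> S"
      then obtain w :: "'a \<times> 'a \<times> 'a \<times> 'a \<Rightarrow> 'a" where n: "n = hweight w" unfolding S_def by blast
      have "hweight w \<le> card (UNIV :: ('a \<times> 'a \<times> 'a \<times> 'a) set)"
        unfolding hweight_def by (rule card_mono) auto
      thus "n \<in> {..card (UNIV :: ('a \<times> 'a \<times> 'a \<times> 'a) set)}" using n by simp
    qed
  qed simp
  obtain w0 where w0: "w0 \<in> hcode TYPE('a) \<eta> dT dX" "w0 \<noteq> (\<lambda>_. 0)" "hweight w0 \<le> Gv CARD('a) \<eta> dT dX"
    using upper_all[OF eta d] by blast
  have "Gv CARD('a) \<eta> dT dX \<le> hweight w0" by (rule lower_all[OF eta d w0(1,2)])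
  hence eq: "hweight w0 = Gv CARD('a) \<eta> dT dX" using w0(3) by simp
  have "Min S = Gv CARD('a) \<eta> dT dX"
  proof (rule Min_eqI[OF finS])
    fix y assume "y \<in> S"
    then obtain w where "y = hweight w" "w \<in> hcode TYPE('a) \<eta> dT dX" "w \<noteq> (\<lambda>_. 0)" unfolding S_def by blast
    thus "Gv CARD('a) \<eta> dT dX \<le> y" using lower_all[OF eta d] by simp
  next
    show "Gv CARD('a) \<eta> dT dX \<in> S" unfolding S_def using w0 eq by force
  qed
  thus ?thesis unfolding hdist_def S_def .
qed

lemma bound_fn_alt:
  "bound_fn q \<eta> dT dX eT eX = Min ((\<lambda>(a,b). card {N \<in> Delta_star q \<eta> (int eT) eX. mono_dvd (Mmono \<eta> dT dX a b) N}) ` K_star q \<eta> dT dX)"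
proof -
  have "(\<lambda>M. card {N \<in> Delta_star q \<eta> (int eT) eX. mono_dvd M N}) ` Delta_star q \<eta> dT dX
      = (\<lambda>(a,b). card {N \<in> Delta_star q \<eta> (int eT) eX. mono_dvd (Mmono \<eta> dT dX a b) N}) ` K_star q \<eta> dT dX"
    unfolding Delta_star_def image_image by (rule image_cong) (auto split: prod.splits)
  thus ?thesis unfolding bound_fn_def by simp
qed

lemma bound_general:
  assumes eta: "\<eta> \<noteq> 1" and d: "dT + int \<eta> * int dX \<ge> 0" and q2: "q \<ge> 2"
    and eT: "eT \<ge> q" and eX: "eX \<ge> q"
  shows "bound_fn q \<eta> dT dX eT eX \<le> Gv q \<eta> dT dX"
proof -
  obtain a b where K: "(a,b) \<in> K_star q \<eta> dT dX" and G: "Gv q \<eta> dT dX = ac q dX a * bcv q \<eta> dT dX a b"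
    using Gv_in[OF eta d q2] by blast
  have "bound_fn q \<eta> dT dX eT eX \<le> card {N \<in> Delta_star q \<eta> (int eT) eX. mono_dvd (Mmono \<eta> dT dX a b) N}"
    unfolding bound_fn_alt by (rule Min_le) (use K K_fin[OF eta d q2] in force)+
  also have "\<dots> \<le> ac q dX a * bcv q \<eta> dT dX a b" by (rule cnt_le[OF eta d q2 K eT eX])
  finally show ?thesis using G by simp
qed

lemma bound_spec:
  assumes eta: "\<eta> \<noteq> 1" and d: "dT + int \<eta> * int dX \<ge> 0" and q2: "q \<ge> 2"
  shows "bound_fn q \<eta> dT dX (nat (dT + int \<eta> * int dX) + q) (dX + q) = Gv q \<eta> dT dX"
proof -
  have "(\<lambda>(a,b). card {N \<in> Delta_star q \<eta> (int (nat (dT + int \<eta> * int dX) + q)) (dX + q). mono_dvd (Mmono \<eta> dT dX a b) N}) ` K_star q \<eta> dT dX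
     = (\<lambda>(a,b). ac q dX a * bcv q \<eta> dT dX a b) ` K_star q \<eta> dT dX"
  proof (rule image_cong[OF refl])
    fix p assume p: "p \<in> K_star q \<eta> dT dX"
    obtain a b where pe: "p = (a,b)" by (cases p) auto
    show "(\<lambda>(a,b). card {N \<in> Delta_star q \<eta> (int (nat (dT + int \<eta> * int dX) + q)) (dX + q). mono_dvd (Mmono \<eta> dT dX a b) N}) p
        = (\<lambda>(a,b). ac q dX a * bcv q \<eta> dT dX a b) p"
      unfolding pe using cnt_eq[OF eta d q2 p[unfolded pe] refl refl] by simp
  qed
  thus ?thesis unfolding bound_fn_alt Gv_def by simp
qed

theorem theorem2:
  fixes \<eta> :: nat and dT :: int and dX :: nat
  assumes "\<eta> \<noteq> 1" and "dT + int \<eta> * int dX \<ge> 0"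
  shows "(\<forall>eT eX. eT \<ge> (card (UNIV :: 'a set)) \<and> eX \<ge> (card (UNIV :: 'a set)) \<longrightarrow>
            hdist TYPE('a::{finite,field}) \<eta> dT dX \<ge> bound_fn (card (UNIV :: 'a set)) \<eta> dT dX eT eX)
       \<and> hdist TYPE('a) \<eta> dT dX
           = bound_fn (card (UNIV :: 'a set)) \<eta> dT dX (nat (dT + int \<eta> * int dX) + (card (UNIV :: 'a set))) (dX + (card (UNIV :: 'a set)))"
proof -
  have q2: "card (UNIV :: 'a set) \<ge> 2" by (rule card_field_ge2)
  have H: "hdist TYPE('a) \<eta> dT dX = Gv (card (UNIV :: 'a set)) \<eta> dT dX" by (rule hdist_eq[OF assms])
  show ?thesis
  proof
    show "\<forall>eT eX. eT \<ge> (card (UNIV :: 'a set)) \<and> eX \<ge> (card (UNIV :: 'a set)) \<longrightarrow>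
            hdist TYPE('a::{finite,field}) \<eta> dT dX \<ge> bound_fn (card (UNIV :: 'a set)) \<eta> dT dX eT eX"
      using bound_general[OF assms q2] H by auto
    show "hdist TYPE('a) \<eta> dT dX
           = bound_fn (card (UNIV :: 'a set)) \<eta> dT dX (nat (dT + int \<eta> * int dX) + (card (UNIV :: 'a set))) (dX + (card (UNIV :: 'a set)))"
      using bound_spec[OF assms q2] H by simp
  qed
qed


end
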